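(* Let $\varepsilon>0$, $\kappa\ge\frac14$, $\Delta t>0$, $C_4=\frac{1}{1-e^{-2}}$, $\gamma^{(0)}=3C_4(1+\kappa)$, $\gamma_1^{(0)}=\frac32C_4(1+\kappa)$, $\gamma_3^{(0)}=\frac12C_4(1+\kappa)$, $\alpha_0=\ln\Big(\frac{\gamma^{(0)}+\frac12\kappa}{\gamma^{(0)}-\frac12\kappa}\Big)$, and suppose $A\ge(\gamma^{(0)}-\frac{\kappa}{4})^4\alpha_0^{-2}\varepsilon^{-2}$. Let $u^{-2},u^{-1},u^0$ be real periodic grid functions with equal means, and let $u^{n+1}$, $n\ge0$, be defined by the scheme $$u^{n+1}=e^{-\Delta tL_N}u^n-A\Delta t^3\phi_0(L_N)\Delta_N^2(u^{n+1}-u^n)-\Delta t\,\phi_0(L_N)f_N(u^n)-\Delta t\,\phi_1(L_N)\Big(\tfrac32f_N(u^n)-2f_N(u^{n-1})+\tfrac12f_N(u^{n-2})\Big)-\Delta t\,\phi_2(L_N)\Big(\tfrac12f_N(u^n)-f_N(u^{n-1})+\tfrac12f_N(u^{n-2})\Big).$$ Define the modified energy $$\tilde E_N(u^{n+1},u^n,u^{n-1})=E_N(u^{n+1})+\gamma_1^{(0)}\|\nabla_N(u^{n+1}-u^n)\|_2^2+\gamma_3^{(0)}\|\nabla_N(u^n-u^{n-1})\|_2^2.$$ Then for every $n\ge0$, $$\tilde E_N(u^{n+1},u^n,u^{n-1})\le \tilde E_N(u^n,u^{n-1},u^{n-2}).$$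
   Context: Setting: $\Omega=(0,1)^2$, $N=2K+1$, $h=1/N$, grid $x_i=ih$, $y_j=jh$; periodic grid functions have discrete Fourier expansions $f_{i,j}=\sum_{k,\ell=-K}^{K}\hat f_{k,\ell}\exp(2\pi\mathrm{i}(kx_i+\ell y_j))$. Spectral operators act as Fourier multipliers: $\mathcal D_{Nx}$, $\mathcal D_{Ny}$ by $2\pi\mathrm{i}k$, $2\pi\mathrm{i}\ell$; $\nabla_N f=(\mathcal D_{Nx}f,\mathcal D_{Ny}f)$, $\nabla_N\cdot(f_1,f_2)=\mathcal D_{Nx}f_1+\mathcal D_{Ny}f_2$, $\Delta_N$ has multiplier $-\lambda_{k,\ell}$, $\lambda_{k,\ell}=(2k\pi)^2+(2\ell\pi)^2$. Inner product $\langle f,g\rangle=h^2\sum_{i,j}f_{i,j}g_{i,j}$, $\|f\|_2=\langle f,f\rangle^{1/2}$. $L_N=\varepsilon^2\Delta_N^2-\kappa\Delta_N$ with multiplier $\Lambda_{k,\ell}=\varepsilon^2\lambda_{k,\ell}^2+\kappa\lambda_{k,\ell}$; $e^{-\Delta tL_N}$ has multiplier $e^{-\Delta t\Lambda_{k,\ell}}$. With $g_0(x)=\frac{1-e^{-x}}{x}$, $g_1(x)=\frac{1-g_0(x)}{x}$, $g_2(x)=\frac{1-2g_1(x)}{x}$: $\phi_0(L_N)=(\Delta tL_N)^{-1}(I-e^{-\Delta tL_N})$, $\phi_1(L_N)=(\Delta tL_N)^{-1}(I-(\Delta tL_N)^{-1}(I-e^{-\Delta tL_N}))$, $\phi_2(L_N)=(\Delta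 tL_N)^{-1}(I-2(\Delta tL_N)^{-1}(I-(\Delta tL_N)^{-1}(I-e^{-\Delta tL_N})))$, i.e. the multipliers $g_j(\Delta t\Lambda_{k,\ell})$, $j=0,1,2$, on nonzero modes (they are applied only to zero-mean grid functions). Nonlinearity (pointwise): $f_N(u)=\nabla_N\cdot\Big(\frac{\nabla_N u}{1+|\nabla_N u|^2}\Big)+\kappa\Delta_N u$. Discrete energy: $E_N(\phi)=h^2\sum_{i,j}\big(-\frac12\ln(1+|\nabla_N\phi|^2)_{i,j}\big)+\frac{\varepsilon^2}{2}\|\Delta_N\phi\|_2^2$. *)

theory Defs
  imports Complex_Main
begin

text \<open>Grid functions on the periodic N x N grid, N = 2K+1. A grid function is
  represented as nat => nat => real; only the values at indices i, j < N matter
  (index i corresponds to x_i = i h, h = 1/N).\<close>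

type_synonym grid = "nat \<Rightarrow> nat \<Rightarrow> real"

definition NN :: "nat \<Rightarrow> nat" where "NN K = 2 * K + 1"

definition hh :: "nat \<Rightarrow> real" where "hh K = 1 / real (NN K)"

definition fcoef :: "nat \<Rightarrow> grid \<Rightarrow> int \<Rightarrow> int \<Rightarrow> complex" where
  "fcoef K f k l = (1 / of_nat (NN K ^ 2)) *
     (\<Sum>i<NN K. \<Sum>j<NN K. complex_of_real (f i j) *
        cis (- 2 * pi * (of_int k * hh K * of_nat i + of_int l * hh K * of_nat j)))"

text \<open>Fourier multiplier with symbol m(k,l) (real part of the synthesis; for the
  symbols used here the synthesis of a real grid function is real).\<close>
definition fmult :: "nat \<Rightarrow> (int \<Rightarrow> int \<Rightarrow> complex) \<Rightarrow> grid \<Rightarrow> grid" where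
  "fmult K m f = (\<lambda>i j. Re (\<Sum>k\<in>{- int K..int K}. \<Sum>l\<in>{- int K..int K}.
      m k l * fcoef K f k l *
      cis (2 * pi * (of_int k * hh K * of_nat i + of_int l * hh K * of_nat j))))"

definition DNx :: "nat \<Rightarrow> grid \<Rightarrow> grid" where
  "DNx K = fmult K (\<lambda>k l. 2 * pi * \<i> * of_int k)"

definition DNy :: "nat \<Rightarrow> grid \<Rightarrow> grid" where
  "DNy K = fmult K (\<lambda>k l. 2 * pi * \<i> * of_int l)"

definition divN :: "nat \<Rightarrow> grid \<Rightarrow> grid \<Rightarrow> grid" where
  "divN K f1 f2 = (\<lambda>i j. DNx K f1 i j + DNy K f2 i j)"

definition lam :: "int \<Rightarrow> int \<Rightarrow> real" where
  "lam k l = (2 * of_int k * pi)\<^sup>2 + (2 * of_int l * pi)\<^sup>2"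

definition LapN :: "nat \<Rightarrow> grid \<Rightarrow> grid" where
  "LapN K = fmult K (\<lambda>k l. complex_of_real (- lam k l))"

text \<open>symbol of L_N = eps^2 Delta_N^2 - kappa Delta_N\<close>
definition LamL :: "real \<Rightarrow> real \<Rightarrow> int \<Rightarrow> int \<Rightarrow> real" where
  "LamL eps kap k l = eps\<^sup>2 * (lam k l)\<^sup>2 + kap * lam k l"

definition expL :: "nat \<Rightarrow> real \<Rightarrow> real \<Rightarrow> real \<Rightarrow> grid \<Rightarrow> grid" where
  "expL K eps kap dt = fmult K (\<lambda>k l. complex_of_real (exp (- dt * LamL eps kap k l)))"

text \<open>g_0, g_1, g_2 (continuously extended at x = 0; on zero-mean inputs the
  value at the zero mode is irrelevant).\<close>
definition g0 :: "real \<Rightarrow> real" where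
  "g0 x = (if x = 0 then 1 else (1 - exp (- x)) / x)"
definition g1 :: "real \<Rightarrow> real" where
  "g1 x = (if x = 0 then 1/2 else (1 - g0 x) / x)"
definition g2 :: "real \<Rightarrow> real" where
  "g2 x = (if x = 0 then 1/3 else (1 - 2 * g1 x) / x)"

definition phiL :: "(real \<Rightarrow> real) \<Rightarrow> nat \<Rightarrow> real \<Rightarrow> real \<Rightarrow> real \<Rightarrow> grid \<Rightarrow> grid" where
  "phiL g K eps kap dt = fmult K (\<lambda>k l. complex_of_real (g (dt * LamL eps kap k l)))"

definition fN :: "nat \<Rightarrow> real \<Rightarrow> grid \<Rightarrow> grid" where
  "fN K kap u = (\<lambda>i j.
     divN K (\<lambda>a b. DNx K u a b / (1 + (DNx K u a b)\<^sup>2 + (DNy K u a b)\<^sup>2))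
            (\<lambda>a b. DNy K u a b / (1 + (DNx K u a b)\<^sup>2 + (DNy K u a b)\<^sup>2)) i j
     + kap * LapN K u i j)"

definition ipN :: "nat \<Rightarrow> grid \<Rightarrow> grid \<Rightarrow> real" where
  "ipN K f g = (hh K)\<^sup>2 * (\<Sum>i<NN K. \<Sum>j<NN K. f i j * g i j)"

definition norm2N :: "nat \<Rightarrow> grid \<Rightarrow> real" where
  "norm2N K f = sqrt (ipN K f f)"

definition gradnorm2N :: "nat \<Rightarrow> grid \<Rightarrow> real" where
  "gradnorm2N K f = sqrt (ipN K (DNx K f) (DNx K f) + ipN K (DNy K f) (DNy K f))"

definition EN :: "nat \<Rightarrow> real \<Rightarrow> grid \<Rightarrow> real" where
  "EN K eps p = (hh K)\<^sup>2 * (\<Sum>i<NN K. \<Sum>j<NN K.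
        - 1/2 * ln (1 + (DNx K p i j)\<^sup>2 + (DNy K p i j)\<^sup>2))
     + eps\<^sup>2 / 2 * (norm2N K (LapN K p))\<^sup>2"

definition gsub :: "grid \<Rightarrow> grid \<Rightarrow> grid" where
  "gsub f g = (\<lambda>i j. f i j - g i j)"

definition Etil :: "nat \<Rightarrow> real \<Rightarrow> real \<Rightarrow> real \<Rightarrow> grid \<Rightarrow> grid \<Rightarrow> grid \<Rightarrow> real" where
  "Etil K eps gam1 gam3 a b c = EN K eps a
     + gam1 * (gradnorm2N K (gsub a b))\<^sup>2 + gam3 * (gradnorm2N K (gsub b c))\<^sup>2"

definition gmean :: "nat \<Rightarrow> grid \<Rightarrow> real" where
  "gmean K f = (\<Sum>i<NN K. \<Sum>j<NN K. f i j) / real (NN K ^ 2)"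

definition scheme_step :: "nat \<Rightarrow> real \<Rightarrow> real \<Rightarrow> real \<Rightarrow> real \<Rightarrow> grid \<Rightarrow> grid \<Rightarrow> grid \<Rightarrow> grid \<Rightarrow> bool" where
  "scheme_step K eps kap dt A unew u um1 um2 \<longleftrightarrow>
    (\<forall>i<NN K. \<forall>j<NN K.
      unew i j =
        expL K eps kap dt u i j
        - A * dt ^ 3 * phiL g0 K eps kap dt (LapN K (LapN K (gsub unew u))) i j
        - dt * phiL g0 K eps kap dt (fN K kap u) i j
        - dt * phiL g1 K eps kap dt
            (\<lambda>a b. 3/2 * fN K kap u a b - 2 * fN K kap um1 a b + 1/2 * fN K kap um2 a b) i j
        - dt * phiL g2 K eps kap dt
            (\<lambda>a b. 1/2 * fN K kap u a b - fN K kap um1 a b + 1/2 * fN K kap um2 a b) i j)"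

end

theory Submission
  imports Defs
begin

definition ch :: "nat \<Rightarrow> int \<Rightarrow> int \<Rightarrow> complex" where
  "ch K k i = cis (2 * pi * of_int k * of_int i / of_nat (NN K))"

lemma NN_pos: "NN K > 0" by (simp add: NN_def)

lemma ch_pow: "ch K m (int i) = (cis (2 * pi * of_int m / of_nat (NN K))) ^ i"
  by (simp add: ch_def DeMoivre algebra_simps)

lemma ch_sym: "ch K k i = ch K i k" by (simp add: ch_def algebra_simps)

lemma ch_mult: "ch K k i * cnj (ch K k' i) = ch K (k - k') i"
  by (simp add: ch_def cis_cnj cis_mult algebra_simps diff_divide_distrib)

lemma ch_mult2: "ch K k i * cnj (ch K k i') = ch K k (i - i')"
  by (simp add: ch_def cis_cnj cis_mult algebra_simps diff_divide_distrib)

lemma geo_sum: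
  fixes m :: int
  shows "(\<Sum>i<NN K. ch K m (int i)) = (if int (NN K) dvd m then of_nat (NN K) else 0)"
proof -
  define N where "N = NN K"
  have N0: "N > 0" using NN_pos N_def by simp
  define z where "z = cis (2 * pi * of_int m / of_nat N)"
  have s: "(\<Sum>i<NN K. ch K m (int i)) = (\<Sum>i<N. z ^ i)"
    by (simp add: ch_pow z_def N_def)
  have zN: "z ^ N = 1"
  proof -
    have "z ^ N = cis (2 * pi * of_int m)" using N0 by (simp add: z_def DeMoivre)
    also have "\<dots> = 1" by (rule cis_multiple_2pi) simp
    finally show ?thesis .
  qed
  show ?thesis
  proof (cases "int N dvd m")
    case True
    then obtain q where q: "m = int N * q" by (auto elim: dvdE)
    have e: "2 * pi * of_int m / of_nat N = 2 * pi * real_of_int q" using N0 by (simp add: q)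
    have "z = cis (2 * pi * real_of_int q)" unfolding z_def e ..
    also have "\<dots> = 1" by (rule cis_multiple_2pi) simp
    finally have "z = 1" .
    then show ?thesis using s True by (simp add: N_def)
  next
    case False
    have "z \<noteq> 1"
    proof
      assume "z = 1"
      then have "cos (2 * pi * of_int m / of_nat N) = 1"
        by (metis cis.sel(1) one_complex.simps(1) z_def)
      then obtain x where x: "2 * pi * of_int m / of_nat N = real_of_int x * 2 * pi"
        using cos_one_2pi_int by blast
      then have "real_of_int m = real_of_int x * of_nat N" using N0
        by (simp add: field_simps)
      then have "m = x * int N" by (metis of_int_eq_iff of_int_mult of_int_of_nat_eq)
      then show False using False by simp
    qed
    then have "(\<Sum>i<N. z ^ i) = 0" using zN by (simp add: geometric_sum)
    then show ?thesis using s False by (simp add: N_def)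
  qed
qed

lemma dvd_small:
  fixes d :: int
  assumes "\<bar>d\<bar> < int (NN K)"
  shows "int (NN K) dvd d \<longleftrightarrow> d = 0"
proof
  assume "int (NN K) dvd d"
  then obtain q where "d = int (NN K) * q" by (auto elim: dvdE)
  with assms show "d = 0"
    by (metis abs_mult abs_of_nat dvd_imp_le_int dvd_triv_left less_le_not_le mult.commute)
qed simp

definition II :: "nat \<Rightarrow> int set" where "II K = {- int K..int K}"

lemma orth1:
  assumes "k \<in> II K" "k' \<in> II K"
  shows "(\<Sum>i<NN K. ch K k (int i) * cnj (ch K k' (int i))) = (if k = k' then of_nat (NN K) else 0)"
proof -
  have "\<bar>k - k'\<bar> < int (NN K)" using assms by (auto simp: II_def NN_def)
  then show ?thesis by (simp add: ch_mult geo_sum dvd_small)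
qed

lemma II_reindex: "II K = (\<lambda>k0. int k0 - int K) ` {..<NN K}"
proof -
  have "x \<in> (\<lambda>k0. int k0 - int K) ` {..<NN K}" if "x \<in> II K" for x
  proof
    show "x = int (nat (x + int K)) - int K" using that by (auto simp: II_def)
    show "nat (x + int K) \<in> {..<NN K}" using that by (auto simp: II_def NN_def)
  qed
  moreover have "(\<lambda>k0. int k0 - int K) ` {..<NN K} \<subseteq> II K"
    by (auto simp: II_def NN_def)
  ultimately show ?thesis by blast
qed

lemma sum_II: "(\<Sum>k\<in>II K. g k) = (\<Sum>k0<NN K. g (int k0 - int K))"
proof -
  have "inj_on (\<lambda>k0. int k0 - int K) {..<NN K}" by (auto simp: inj_on_def)
  then show ?thesis by (simp add: II_reindex sum.reindex)
qed

lemma orth2: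
  assumes "i < NN K" "i' < NN K"
  shows "(\<Sum>k\<in>II K. ch K k (int i) * cnj (ch K k (int i'))) = (if i = i' then of_nat (NN K) else 0)"
proof -
  define d where "d = int i - int i'"
  have dl: "\<bar>d\<bar> < int (NN K)" using assms by (auto simp: d_def)
  have "(\<Sum>k\<in>II K. ch K k (int i) * cnj (ch K k (int i'))) = (\<Sum>k\<in>II K. ch K d k)"
    by (simp add: ch_mult2 ch_sym d_def)
  also have "\<dots> = (\<Sum>k0<NN K. ch K d (int k0 - int K))" by (rule sum_II)
  also have "\<dots> = (\<Sum>k0<NN K. cnj (ch K d (int K)) * ch K d (int k0))"
    by (rule sum.cong) (simp_all add: ch_def cis_cnj cis_mult algebra_simps diff_divide_distrib)
  also have "\<dots> = cnj (ch K d (int K)) * (if int (NN K) dvd d then of_nat (NN K) else 0)"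
    by (simp add: sum_distrib_left[symmetric] geo_sum)
  also have "\<dots> = (if i = i' then of_nat (NN K) else 0)"
    using dl by (simp add: dvd_small d_def ch_def)
  finally show ?thesis .
qed


lemma finite_II [simp]: "finite (II K)" by (simp add: II_def)

lemma sum4_swap:
  "(\<Sum>i\<in>A. \<Sum>j\<in>B. \<Sum>k\<in>C. \<Sum>l\<in>D. f i j k l) = (\<Sum>k\<in>C. \<Sum>l\<in>D. \<Sum>i\<in>A. \<Sum>j\<in>B. (f i j k l :: 'a::comm_monoid_add))"
proof -
  have "(\<Sum>i\<in>A. \<Sum>j\<in>B. \<Sum>k\<in>C. \<Sum>l\<in>D. f i j k l) = (\<Sum>i\<in>A. \<Sum>k\<in>C. \<Sum>j\<in>B. \<Sum>l\<in>D. f i j k l)"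
    by (rule sum.cong[OF refl], rule sum.swap)
  also have "\<dots> = (\<Sum>k\<in>C. \<Sum>i\<in>A. \<Sum>j\<in>B. \<Sum>l\<in>D. f i j k l)" by (rule sum.swap)
  also have "\<dots> = (\<Sum>k\<in>C. \<Sum>i\<in>A. \<Sum>l\<in>D. \<Sum>j\<in>B. f i j k l)"
    by (rule sum.cong[OF refl], rule sum.cong[OF refl], rule sum.swap)
  also have "\<dots> = (\<Sum>k\<in>C. \<Sum>l\<in>D. \<Sum>i\<in>A. \<Sum>j\<in>B. f i j k l)"
    by (rule sum.cong[OF refl], rule sum.swap)
  finally show ?thesis .
qed

definition syn :: "nat \<Rightarrow> (int \<Rightarrow> int \<Rightarrow> complex) \<Rightarrow> nat \<Rightarrow> nat \<Rightarrow> complex" where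
  "syn K a i j = (\<Sum>k\<in>II K. \<Sum>l\<in>II K. a k l * (ch K k (int i) * ch K l (int j)))"

lemma fcoef_alt: "fcoef K f k l = (1 / of_nat (NN K) ^ 2) *
   (\<Sum>i<NN K. \<Sum>j<NN K. of_real (f i j) * cnj (ch K k (int i) * ch K l (int j)))"
  unfolding fcoef_def
  by (simp add: ch_def cis_cnj cis_mult hh_def add_divide_distrib algebra_simps)

lemma fmult_alt: "fmult K m f i j = Re (syn K (\<lambda>k l. m k l * fcoef K f k l) i j)"
  unfolding fmult_def syn_def II_def
  by (simp add: ch_def cis_mult hh_def add_divide_distrib algebra_simps)

lemma ana_syn:
  assumes "k' \<in> II K" "l' \<in> II K"
  shows "(\<Sum>i<NN K. \<Sum>j<NN K. syn K a i j * cnj (ch K k' (int i) * ch K l' (int j)))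
     = of_nat (NN K) ^ 2 * a k' l'"
proof -
  have "(\<Sum>i<NN K. \<Sum>j<NN K. syn K a i j * cnj (ch K k' (int i) * ch K l' (int j)))
    = (\<Sum>i<NN K. \<Sum>j<NN K. \<Sum>k\<in>II K. \<Sum>l\<in>II K. a k l * ((ch K k (int i) * cnj (ch K k' (int i))) * (ch K l (int j) * cnj (ch K l' (int j)))))"
    unfolding syn_def sum_distrib_right by (intro sum.cong refl) (simp add: mult_ac)
  also have "\<dots> = (\<Sum>k\<in>II K. \<Sum>l\<in>II K. \<Sum>i<NN K. \<Sum>j<NN K. a k l * ((ch K k (int i) * cnj (ch K k' (int i))) * (ch K l (int j) * cnj (ch K l' (int j)))))"
    by (rule sum4_swap)
  also have "\<dots> = (\<Sum>k\<in>II K. \<Sum>l\<in>II K. a k l * ((\<Sum>i<NN K. ch K k (int i) * cnj (ch K k' (int i))) * (\<Sum>j<NN K. ch K l (int j) * cnj (ch K l' (int j)))))"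
    apply (simp only: sum_product) apply (simp only: sum_distrib_left) done
  also have "\<dots> = (\<Sum>k\<in>II K. \<Sum>l\<in>II K. a k l * ((if k = k' then of_nat (NN K) else 0) * (if l = l' then of_nat (NN K) else 0)))"
    by (intro sum.cong refl) (simp add: orth1 assms)
  also have "\<dots> = (\<Sum>k\<in>II K. \<Sum>l\<in>II K. if k = k' then (if l = l' then of_nat (NN K) ^ 2 * a k' l' else 0) else 0)"
    by (intro sum.cong refl) (auto simp: power2_eq_square)
  also have "\<dots> = (\<Sum>k\<in>II K. if k = k' then of_nat (NN K) ^ 2 * a k' l' else 0)"
    by (intro sum.cong refl) (use assms in \<open>auto simp: sum.delta sum.delta'\<close>)
  also have "\<dots> = of_nat (NN K) ^ 2 * a k' l'"
    using assms by (simp add: sum.delta')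
  finally show ?thesis .
qed

lemma inversion:
  assumes "i < NN K" "j < NN K"
  shows "syn K (fcoef K f) i j = of_real (f i j)"
proof -
  have N0: "(of_nat (NN K) :: complex) \<noteq> 0" using NN_pos by simp
  have "syn K (fcoef K f) i j = (1 / of_nat (NN K) ^ 2) *
     (\<Sum>k\<in>II K. \<Sum>l\<in>II K. \<Sum>i'<NN K. \<Sum>j'<NN K. of_real (f i' j') *
        ((ch K k (int i) * cnj (ch K k (int i'))) * (ch K l (int j) * cnj (ch K l (int j')))))"
    by (simp only: syn_def fcoef_alt sum_distrib_left sum_distrib_right) (intro sum.cong refl; simp add: mult_ac)
  also have "\<dots> = (1 / of_nat (NN K) ^ 2) *
     (\<Sum>i'<NN K. \<Sum>j'<NN K. \<Sum>k\<in>II K. \<Sum>l\<in>II K. of_real (f i' j') *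
        ((ch K k (int i) * cnj (ch K k (int i'))) * (ch K l (int j) * cnj (ch K l (int j')))))"
    by (subst sum4_swap) (rule refl)
  also have "\<dots> = (1 / of_nat (NN K) ^ 2) *
     (\<Sum>i'<NN K. \<Sum>j'<NN K. of_real (f i' j') *
        ((\<Sum>k\<in>II K. ch K k (int i) * cnj (ch K k (int i'))) * (\<Sum>l\<in>II K. ch K l (int j) * cnj (ch K l (int j')))))"
    apply (simp only: sum_product) apply (simp only: sum_distrib_left) done
  also have "\<dots> = (1 / of_nat (NN K) ^ 2) *
     (\<Sum>i'<NN K. \<Sum>j'<NN K. of_real (f i' j') *
        ((if i = i' then of_nat (NN K) else 0) * (if j = j' then of_nat (NN K) else 0)))"
    by (intro arg_cong2[where f="(*)"] sum.cong refl) (auto simp: orth2 assms)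
  also have "\<dots> = (1 / of_nat (NN K) ^ 2) *
     (\<Sum>i'<NN K. \<Sum>j'<NN K. if i' = i then (if j' = j then of_nat (NN K) ^ 2 * of_real (f i j) else 0) else 0)"
    by (intro arg_cong2[where f="(*)"] sum.cong refl) (auto simp: power2_eq_square)
  also have "\<dots> = (1 / of_nat (NN K) ^ 2) *
     (\<Sum>i'<NN K. if i' = i then of_nat (NN K) ^ 2 * of_real (f i j) else 0)"
    by (intro arg_cong2[where f="(*)"] sum.cong refl) (use assms in \<open>auto simp: sum.delta\<close>)
  also have "\<dots> = of_real (f i j)"
    using assms N0 by (simp add: sum.delta)
  finally show ?thesis .
qed

lemma ch_neg: "ch K (- k) i = cnj (ch K k i)"
  by (simp add: ch_def cis_cnj)

lemma fcoef_herm: "fcoef K f (- k) (- l) = cnj (fcoef K f k l)"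
  unfolding fcoef_alt by (simp add: ch_neg)

lemma sum_II_neg: "(\<Sum>k\<in>II K. g (- k)) = (\<Sum>k\<in>II K. g k)"
proof -
  have "uminus ` II K = II K" unfolding II_def
    by (auto simp: image_iff)
  moreover have "inj_on uminus (II K)" by (simp add: inj_on_def)
  ultimately show ?thesis using sum.reindex[of uminus "II K" g] by (simp add: comp_def)
qed

lemma syn_real:
  assumes "\<And>k l. a (- k) (- l) = cnj (a k l)"
  shows "of_real (Re (syn K a i j)) = syn K a i j"
proof -
  have "cnj (syn K a i j) = (\<Sum>k\<in>II K. \<Sum>l\<in>II K. a (- k) (- l) * (ch K (- k) (int i) * ch K (- l) (int j)))"
    unfolding syn_def by (simp add: assms ch_neg)
  also have "\<dots> = syn K a i j"
    unfolding syn_def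
    by (subst sum_II_neg[where g="\<lambda>k. \<Sum>l\<in>II K. a k (- l) * (ch K k (int i) * ch K (- l) (int j))"])
       (simp add: sum_II_neg[where g="\<lambda>l. a _ l * (ch K _ (int i) * ch K l (int j))"])
  finally have "cnj (syn K a i j) = syn K a i j" .
  then have "Im (syn K a i j) = 0" by (metis Reals_cnj_iff complex_is_Real_iff)
  then show ?thesis by (simp add: complex_eq_iff)
qed

definition herm :: "(int \<Rightarrow> int \<Rightarrow> complex) \<Rightarrow> bool" where
  "herm m \<longleftrightarrow> (\<forall>k l. m (- k) (- l) = cnj (m k l))"

lemma fmult_syn:
  assumes "herm m"
  shows "of_real (fmult K m f i j) = syn K (\<lambda>k l. m k l * fcoef K f k l) i j"
  unfolding fmult_alt
  by (rule syn_real) (use assms in \<open>simp add: herm_def fcoef_herm\<close>)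

lemma fcoef_syn:
  assumes "k \<in> II K" "l \<in> II K" "\<And>i j. i < NN K \<Longrightarrow> j < NN K \<Longrightarrow> of_real (g i j) = syn K a i j"
  shows "fcoef K g k l = a k l"
proof -
  have N0: "(of_nat (NN K) :: complex) \<noteq> 0" using NN_pos by simp
  have "fcoef K g k l = (1 / of_nat (NN K) ^ 2) *
   (\<Sum>i<NN K. \<Sum>j<NN K. syn K a i j * cnj (ch K k (int i) * ch K l (int j)))"
    unfolding fcoef_alt by (simp add: assms(3))
  also have "\<dots> = a k l" using N0 ana_syn[OF assms(1,2), of a] by (simp add: field_simps)
  finally show ?thesis .
qed

lemma fcoef_fmult:
  assumes "herm m" "k \<in> II K" "l \<in> II K"
  shows "fcoef K (fmult K m f) k l = m k l * fcoef K f k l"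
  using fcoef_syn[OF assms(2,3), of "fmult K m f" "\<lambda>k l. m k l * fcoef K f k l"]
    fmult_syn[OF assms(1)] by simp

lemma parseval_c:
  "of_real (ipN K f g) = (\<Sum>k\<in>II K. \<Sum>l\<in>II K. fcoef K f k l * cnj (fcoef K g k l))"
proof -
  have N0: "(of_nat (NN K) :: complex) \<noteq> 0" using NN_pos by simp
  have "of_real (ipN K f g) = (1 / of_nat (NN K) ^ 2) * (\<Sum>i<NN K. \<Sum>j<NN K. syn K (fcoef K f) i j * of_real (g i j))"
    unfolding ipN_def hh_def by (simp add: inversion power_divide)
  also have "\<dots> = (1 / of_nat (NN K) ^ 2) * (\<Sum>i<NN K. \<Sum>j<NN K. \<Sum>k\<in>II K. \<Sum>l\<in>II K.
       fcoef K f k l * (of_real (g i j) * (ch K k (int i) * ch K l (int j))))"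
    unfolding syn_def sum_distrib_right sum_distrib_left by (intro sum.cong refl) (simp add: mult_ac)
  also have "\<dots> = (1 / of_nat (NN K) ^ 2) * (\<Sum>k\<in>II K. \<Sum>l\<in>II K. \<Sum>i<NN K. \<Sum>j<NN K.
       fcoef K f k l * (of_real (g i j) * (ch K k (int i) * ch K l (int j))))"
    by (subst sum4_swap) (rule refl)
  also have "\<dots> = (\<Sum>k\<in>II K. \<Sum>l\<in>II K. fcoef K f k l * ((1 / of_nat (NN K) ^ 2) * (\<Sum>i<NN K. \<Sum>j<NN K.
       (of_real (g i j) * (ch K k (int i) * ch K l (int j))))))"
    by (simp add: sum_distrib_left algebra_simps)
  also have "\<dots> = (\<Sum>k\<in>II K. \<Sum>l\<in>II K. fcoef K f k l * cnj (fcoef K g k l))"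
    unfolding fcoef_alt by simp
  finally show ?thesis .
qed

lemma parseval: "ipN K f g = Re (\<Sum>k\<in>II K. \<Sum>l\<in>II K. fcoef K f k l * cnj (fcoef K g k l))"
  by (metis Re_complex_of_real parseval_c)

lemma parseval_sq: "ipN K f f = (\<Sum>k\<in>II K. \<Sum>l\<in>II K. (cmod (fcoef K f k l))\<^sup>2)"
proof -
  have "ipN K f f = Re (\<Sum>k\<in>II K. \<Sum>l\<in>II K. fcoef K f k l * cnj (fcoef K f k l))" by (rule parseval)
  also have "\<dots> = (\<Sum>k\<in>II K. \<Sum>l\<in>II K. (cmod (fcoef K f k l))\<^sup>2)"
    by (simp add: complex_mult_cnj Re_sum cmod_power2)
  finally show ?thesis .
qed

lemma fcoef_lin: "fcoef K (\<lambda>i j. a * f i j + b * g i j) k l = of_real a * fcoef K f k l + of_real b * fcoef K g k l"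
  unfolding fcoef_alt by (simp add: sum.distrib sum_distrib_left algebra_simps)

lemma fcoef_cong: "(\<And>i j. i < NN K \<Longrightarrow> j < NN K \<Longrightarrow> f i j = g i j) \<Longrightarrow> fcoef K f k l = fcoef K g k l"
  unfolding fcoef_alt by simp

lemma fmult_diff: "fmult K m (\<lambda>i j. f i j - g i j) i j = fmult K m f i j - fmult K m g i j"
proof -
  have "fcoef K (\<lambda>i j. f i j - g i j) k l = fcoef K f k l - fcoef K g k l" for k l
    using fcoef_lin[of K 1 f "-1" g k l] by simp
  then have e: "fcoef K (\<lambda>i j. f i j - g i j) = (\<lambda>k l. fcoef K f k l - fcoef K g k l)" by (intro ext)
  show ?thesis unfolding fmult_def e
    by (simp only: right_diff_distrib left_diff_distrib sum_subtractf minus_complex.sel)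
qed


lemma lam_neg: "lam (- k) (- l) = lam k l" by (simp add: lam_def)
lemma LamL_neg: "LamL e a (- k) (- l) = LamL e a k l" by (simp add: LamL_def lam_neg)

lemma herm_real: "(\<And>k l. r (- k) (- l) = r k l) \<Longrightarrow> herm (\<lambda>k l. complex_of_real (r k l))"
  by (simp add: herm_def)

lemma herm_x: "herm (\<lambda>k l. complex_of_real (2 * pi) * \<i> * complex_of_int k)"
  by (simp add: herm_def)
lemma herm_y: "herm (\<lambda>k l. complex_of_real (2 * pi) * \<i> * complex_of_int l)"
  by (simp add: herm_def)

lemma cDx: "k \<in> II K \<Longrightarrow> l \<in> II K \<Longrightarrow>
  fcoef K (DNx K f) k l = complex_of_real (2 * pi) * \<i> * of_int k * fcoef K f k l"
  unfolding DNx_def by (rule fcoef_fmult[OF herm_x])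
lemma cDy: "k \<in> II K \<Longrightarrow> l \<in> II K \<Longrightarrow>
  fcoef K (DNy K f) k l = complex_of_real (2 * pi) * \<i> * of_int l * fcoef K f k l"
  unfolding DNy_def by (rule fcoef_fmult[OF herm_y])
lemma cLap: "k \<in> II K \<Longrightarrow> l \<in> II K \<Longrightarrow>
  fcoef K (LapN K f) k l = - of_real (lam k l) * fcoef K f k l"
  unfolding LapN_def using fcoef_fmult[of "\<lambda>k l. complex_of_real (- lam k l)" k K l f]
  by (simp add: herm_def lam_neg)
lemma cexp: "k \<in> II K \<Longrightarrow> l \<in> II K \<Longrightarrow>
  fcoef K (expL K e a dt f) k l = of_real (exp (- dt * LamL e a k l)) * fcoef K f k l"
  unfolding expL_def by (simp add: fcoef_fmult herm_real LamL_neg)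
lemma cphi: "k \<in> II K \<Longrightarrow> l \<in> II K \<Longrightarrow>
  fcoef K (phiL g K e a dt f) k l = of_real (g (dt * LamL e a k l)) * fcoef K f k l"
  unfolding phiL_def by (simp add: fcoef_fmult herm_real LamL_neg)

lemma fcoef_add: "fcoef K (\<lambda>i j. f i j + g i j) k l = fcoef K f k l + fcoef K g k l"
  using fcoef_lin[of K 1 f 1 g k l] by simp
lemma fcoef_sub: "fcoef K (\<lambda>i j. f i j - g i j) k l = fcoef K f k l - fcoef K g k l"
  using fcoef_lin[of K 1 f "-1" g k l] by simp
lemma fcoef_scale: "fcoef K (\<lambda>i j. a * f i j) k l = of_real a * fcoef K f k l"
  using fcoef_lin[of K a f 0 f k l] by simp

definition Hx :: "nat \<Rightarrow> real \<Rightarrow> grid \<Rightarrow> grid" where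
  "Hx K kap u = (\<lambda>a b. DNx K u a b / (1 + (DNx K u a b)\<^sup>2 + (DNy K u a b)\<^sup>2) + kap * DNx K u a b)"
definition Hy :: "nat \<Rightarrow> real \<Rightarrow> grid \<Rightarrow> grid" where
  "Hy K kap u = (\<lambda>a b. DNy K u a b / (1 + (DNx K u a b)\<^sup>2 + (DNy K u a b)\<^sup>2) + kap * DNy K u a b)"
definition Fx :: "nat \<Rightarrow> grid \<Rightarrow> grid" where
  "Fx K u = (\<lambda>a b. DNx K u a b / (1 + (DNx K u a b)\<^sup>2 + (DNy K u a b)\<^sup>2))"
definition Fy :: "nat \<Rightarrow> grid \<Rightarrow> grid" where
  "Fy K u = (\<lambda>a b. DNy K u a b / (1 + (DNx K u a b)\<^sup>2 + (DNy K u a b)\<^sup>2))"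

lemma lam_c: "complex_of_real (lam k l) = - ((complex_of_real (2 * pi) * \<i> * of_int k)^2 + (complex_of_real (2 * pi) * \<i> * of_int l)^2)"
  by (simp add: lam_def power_mult_distrib algebra_simps)

lemma cfN_H: "k \<in> II K \<Longrightarrow> l \<in> II K \<Longrightarrow>
  fcoef K (fN K kap u) k l = complex_of_real (2 * pi) * \<i> * of_int k * fcoef K (Hx K kap u) k l
                           + complex_of_real (2 * pi) * \<i> * of_int l * fcoef K (Hy K kap u) k l"
proof -
  assume kl: "k \<in> II K" "l \<in> II K"
  have e1: "fN K kap u = (\<lambda>i j. (DNx K (Fx K u) i j + DNy K (Fy K u) i j) + kap * LapN K u i j)"
    unfolding fN_def divN_def Fx_def Fy_def by simp
  have e2: "Hx K kap u = (\<lambda>i j. Fx K u i j + kap * DNx K u i j)" unfolding Hx_def Fx_def by simp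
  have e3: "Hy K kap u = (\<lambda>i j. Fy K u i j + kap * DNy K u i j)" unfolding Hy_def Fy_def by simp
  show ?thesis unfolding e1 e2 e3
    apply (simp only: fcoef_add fcoef_scale)
    apply (simp add: kl cDx cDy cLap lam_c)
    apply (simp add: algebra_simps power2_eq_square)
    done
qed

lemma cfN_N: "k \<in> II K \<Longrightarrow> l \<in> II K \<Longrightarrow>
  fcoef K (fN K kap u) k l = complex_of_real (2 * pi) * \<i> * of_int k * fcoef K (Fx K u) k l
                           + complex_of_real (2 * pi) * \<i> * of_int l * fcoef K (Fy K u) k l
                           - of_real (kap * lam k l) * fcoef K u k l"
proof -
  assume kl: "k \<in> II K" "l \<in> II K"
  have e1: "fN K kap u = (\<lambda>i j. (DNx K (Fx K u) i j + DNy K (Fy K u) i j) + kap * LapN K u i j)"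
    unfolding fN_def divN_def Fx_def Fy_def by simp
  show ?thesis unfolding e1
    apply (simp only: fcoef_add fcoef_scale)
    apply (simp add: kl cDx cDy cLap)
    done
qed

lemma scheme_coef:
  assumes "scheme_step K eps kap dt A unew u um1 um2" "k \<in> II K" "l \<in> II K"
  defines "x \<equiv> dt * LamL eps kap k l"
  shows "fcoef K unew k l = of_real (exp (- x)) * fcoef K u k l
     - of_real (A * dt ^ 3 * g0 x * (lam k l)^2) * (fcoef K unew k l - fcoef K u k l)
     - of_real (dt * g0 x) * fcoef K (fN K kap u) k l
     - of_real (dt * g1 x) * (3/2 * fcoef K (fN K kap u) k l - 2 * fcoef K (fN K kap um1) k l + 1/2 * fcoef K (fN K kap um2) k l)
     - of_real (dt * g2 x) * (1/2 * fcoef K (fN K kap u) k l - fcoef K (fN K kap um1) k l + 1/2 * fcoef K (fN K kap um2) k l)"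
proof -
  have "fcoef K unew k l = fcoef K (\<lambda>i j.
        expL K eps kap dt u i j
        - A * dt ^ 3 * phiL g0 K eps kap dt (LapN K (LapN K (gsub unew u))) i j
        - dt * phiL g0 K eps kap dt (fN K kap u) i j
        - dt * phiL g1 K eps kap dt
            (\<lambda>a b. 3/2 * fN K kap u a b - 2 * fN K kap um1 a b + 1/2 * fN K kap um2 a b) i j
        - dt * phiL g2 K eps kap dt
            (\<lambda>a b. 1/2 * fN K kap u a b - fN K kap um1 a b + 1/2 * fN K kap um2 a b) i j) k l"
    by (rule fcoef_cong) (use assms(1) in \<open>simp add: scheme_step_def\<close>)
  also have "\<dots> = of_real (exp (- x)) * fcoef K u k l
     - of_real (A * dt ^ 3 * g0 x * (lam k l)^2) * (fcoef K unew k l - fcoef K u k l)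
     - of_real (dt * g0 x) * fcoef K (fN K kap u) k l
     - of_real (dt * g1 x) * (3/2 * fcoef K (fN K kap u) k l - 2 * fcoef K (fN K kap um1) k l + 1/2 * fcoef K (fN K kap um2) k l)
     - of_real (dt * g2 x) * (1/2 * fcoef K (fN K kap u) k l - fcoef K (fN K kap um1) k l + 1/2 * fcoef K (fN K kap um2) k l)"
    apply (simp only: fcoef_sub fcoef_add fcoef_scale)
    apply (simp only: assms(2,3) cexp cphi cLap gsub_def fcoef_sub fcoef_add fcoef_scale x_def[symmetric])
    apply (simp add: algebra_simps power2_eq_square x_def)
    done
  finally show ?thesis .
qed


lemma pade: fixes x :: real assumes "0 \<le> x" shows "exp x * (2 - x) \<le> 2 + x"
proof -
  define h where "h t = 2 + t - exp t * (2 - t)" for t :: real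
  have "h 0 \<le> h x"
  proof (rule DERIV_nonneg_imp_nondecreasing[OF assms])
    fix t :: real assume t: "0 \<le> t" "t \<le> x"
    have d: "(h has_real_derivative (1 - exp t * (1 - t))) (at t)"
      unfolding h_def by (auto intro!: derivative_eq_intros simp: algebra_simps)
    have "exp t * (1 - t) \<le> 1"
    proof (cases "t < 1")
      case True
      have "1 - t \<le> exp (- t)" using exp_ge_add_one_self[of "-t"] by simp
      then have "exp t * (1 - t) \<le> exp t * exp (- t)" by (simp add: mult_left_mono)
      then show ?thesis by (simp add: exp_minus_inverse)
    next
      case False
      then have "exp t * (1 - t) \<le> 0" by (simp add: mult_nonneg_nonpos)
      then show ?thesis by simp
    qed
    with d show "\<exists>y. (h has_real_derivative y) (at t) \<and> 0 \<le> y" by auto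
  qed
  then show ?thesis by (simp add: h_def)
qed

lemma g2_aux: fixes x :: real assumes "0 \<le> x" shows "2 * exp (- x) \<le> x\<^sup>2 - 2 * x + 2"
proof -
  define h where "h t = t\<^sup>2 - 2 * t + 2 - 2 * exp (- t)" for t :: real
  have "h 0 \<le> h x"
  proof (rule DERIV_nonneg_imp_nondecreasing[OF assms])
    fix t :: real assume t: "0 \<le> t" "t \<le> x"
    have d: "(h has_real_derivative (2 * t - 2 + 2 * exp (- t))) (at t)"
      unfolding h_def by (auto intro!: derivative_eq_intros simp: algebra_simps)
    have "1 - t \<le> exp (- t)" using exp_ge_add_one_self[of "-t"] by simp
    with d show "\<exists>y. (h has_real_derivative y) (at t) \<and> 0 \<le> y" by (intro exI[of _ "2 * t - 2 + 2 * exp (- t)"]) auto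
  qed
  then show ?thesis by (simp add: h_def)
qed

lemma g0_pos: "0 \<le> x \<Longrightarrow> 0 < g0 x"
proof -
  assume x: "0 \<le> x"
  show ?thesis
  proof (cases "x = 0")
    case False
    then have "x > 0" using x by simp
    then have "exp (- x) < 1" by simp
    then show ?thesis using \<open>x > 0\<close> by (simp add: g0_def)
  qed (simp add: g0_def)
qed

lemma g0_eq: "x \<noteq> 0 \<Longrightarrow> x * g0 x = 1 - exp (- x)"
  by (simp add: g0_def)

lemma g_bounds:
  assumes "0 \<le> x"
  shows "0 \<le> g2 x" "g2 x \<le> g1 x" "g1 x \<le> g0 x"
proof -
  have all: "0 \<le> g2 x \<and> g2 x \<le> g1 x \<and> g1 x \<le> g0 x"
  proof (cases "x = 0")
    case True then show ?thesis by (simp add: g0_def g1_def g2_def)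
  next
    case False
    then have xp: "x > 0" using assms by simp
    define e where "e = exp (- x)"
    have e0: "1 - x \<le> e" unfolding e_def using exp_ge_add_one_self[of "-x"] by simp
    have e1: "e * (1 + x) \<le> 1"
    proof -
      have "1 + x \<le> exp x" by (rule exp_ge_add_one_self)
      then have "e * (1 + x) \<le> e * exp x" by (simp add: e_def)
      then show ?thesis by (simp add: e_def mult_exp_exp)
    qed
    have e2: "2 * e \<le> x\<^sup>2 - 2 * x + 2" unfolding e_def using g2_aux assms by simp
    have e3: "2 - x \<le> e * (2 + x)"
    proof -
      have "exp x * (2 - x) \<le> 2 + x" using pade assms by simp
      then have "e * (exp x * (2 - x)) \<le> e * (2 + x)" by (simp add: e_def)
      then show ?thesis by (simp add: e_def mult_exp_exp mult.assoc[symmetric])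
    qed
    have G0: "g0 x = (1 - e) / x" using False by (simp add: g0_def e_def)
    have G1: "g1 x = (x - 1 + e) / x\<^sup>2" using False
      by (simp add: g1_def G0 field_simps power2_eq_square)
    have G2: "g2 x = (x\<^sup>2 - 2 * x + 2 - 2 * e) / x ^ 3" using False
      by (simp add: g2_def G1 field_simps power2_eq_square power3_eq_cube)
    have a: "0 \<le> g2 x" unfolding G2 using e2 xp by simp
    have b: "g2 x \<le> g1 x" unfolding G2 G1 using xp e3
      by (simp add: divide_simps power2_eq_square power3_eq_cube) (simp add: algebra_simps)
    have c: "g1 x \<le> g0 x" unfolding G0 G1 using xp e1
      by (simp add: divide_simps power2_eq_square) (simp add: algebra_simps)
    show ?thesis using a b c by simp
  qed
  then show "0 \<le> g2 x" "g2 x \<le> g1 x" "g1 x \<le> g0 x" by auto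
qed


lemma inv_dtg0:
  fixes dt L :: real
  assumes "dt > 0" "L > 0"
  shows "1 / (dt * g0 (dt * L)) \<ge> L" "1 / (dt * g0 (dt * L)) \<ge> 1 / dt + L / 2"
proof -
  define x where "x = dt * L"
  have xp: "x > 0" using assms by (simp add: x_def)
  define e where "e = exp (- x)"
  have e01: "0 < e" "e < 1" using xp by (auto simp: e_def)
  have eq: "1 / (dt * g0 x) = L / (1 - e)"
    using xp assms by (simp add: g0_def e_def x_def field_simps)
  show "1 / (dt * g0 (dt * L)) \<ge> L"
    unfolding x_def[symmetric] eq using e01 assms by (simp add: field_simps)
  have p: "exp x * (2 - x) \<le> 2 + x" using pade xp by simp
  have p2: "2 - x \<le> e * (2 + x)"
  proof -
    have "e * (exp x * (2 - x)) \<le> e * (2 + x)" using p e01 by (simp add: mult_left_mono)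
    then show ?thesis by (simp add: e_def mult_exp_exp mult.assoc[symmetric])
  qed
  have "1 / dt + L / 2 \<le> L / (1 - e)"
  proof -
    have "(1 / dt + L / 2) * (1 - e) \<le> L"
    proof -
      have "(1 / dt + L / 2) * (1 - e) = (2 + x) * (1 - e) / (2 * dt)"
        using assms by (simp add: x_def field_simps)
      also have "\<dots> \<le> (2 * x) / (2 * dt)"
        using p2 assms by (intro divide_right_mono) (auto simp: algebra_simps)
      also have "\<dots> = L" using assms by (simp add: x_def)
      finally show ?thesis .
    qed
    then show ?thesis using e01 by (simp add: field_simps)
  qed
  then show "1 / (dt * g0 (dt * L)) \<ge> 1 / dt + L / 2" unfolding x_def[symmetric] eq .
qed


lemma mode_ineq:
  fixes eps kap dt A g lam :: real
  assumes "eps > 0" "kap \<ge> 0" "dt > 0" "lam > 0" "g \<ge> 0"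
    and A: "A \<ge> 2 * (g + 1/2) ^ 4 / eps\<^sup>2"
  shows "1 / (dt * g0 (dt * (eps\<^sup>2 * lam\<^sup>2 + kap * lam))) + A * dt\<^sup>2 * lam\<^sup>2 - lam / 2 - eps\<^sup>2 * lam\<^sup>2 / 2 \<ge> g * lam"
proof -
  define L where "L = eps\<^sup>2 * lam\<^sup>2 + kap * lam"
  have Lp: "L > 0" using assms by (simp add: L_def add_pos_nonneg)
  note F = inv_dtg0[OF assms(3) Lp]
  have gp: "g + 1/2 > 0" using assms by simp
  have B0: "2 * (g + 1/2) ^ 4 / eps\<^sup>2 \<ge> 0" using gp by simp
  have A0: "A \<ge> 0" using A B0 by linarith
  have Ad: "A * dt\<^sup>2 * lam\<^sup>2 \<ge> 0" using A0 by simp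
  have kl: "kap * lam \<ge> 0" using assms by simp
  define X where "X = 1 / (dt * g0 (dt * L))"
  show ?thesis unfolding L_def[symmetric] X_def[symmetric]
  proof (cases "lam \<ge> (2 * g + 1) / eps\<^sup>2")
    case True
    then have "eps\<^sup>2 * lam \<ge> 2 * g + 1" using assms by (simp add: field_simps)
    then have "eps\<^sup>2 * lam * lam \<ge> (2 * g + 1) * lam" using assms by (simp add: mult_right_mono)
    then have h1: "eps\<^sup>2 * lam\<^sup>2 \<ge> 2 * (g * lam) + lam" by (simp add: power2_eq_square algebra_simps)
    have F1: "X \<ge> eps\<^sup>2 * lam\<^sup>2 + kap * lam" using F(1) unfolding X_def L_def .
    show "X + A * dt\<^sup>2 * lam\<^sup>2 - lam / 2 - eps\<^sup>2 * lam\<^sup>2 / 2 \<ge> g * lam"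
      using h1 F1 Ad kl by linarith
  next
    case False
    then have lsmall: "eps\<^sup>2 * lam < 2 * g + 1" using assms by (simp add: field_simps)
    have key: "1 / dt + A * dt\<^sup>2 * lam\<^sup>2 \<ge> (g + 1/2) * lam"
    proof (cases "dt * ((g + 1/2) * lam) \<le> 1")
      case True
      then have "(g + 1/2) * lam \<le> 1 / dt" using assms by (simp add: field_simps)
      then show ?thesis using Ad by simp
    next
      case False
      then have d1: "dt * ((g + 1/2) * lam) > 1" by simp
      have "(dt * ((g + 1/2) * lam))\<^sup>2 \<ge> 1" using d1 by (simp add: one_le_power)
      then have "A * (dt * ((g + 1/2) * lam))\<^sup>2 \<ge> A" using A0 by (simp add: mult_le_cancel_left1)
      moreover have "A * (dt * ((g + 1/2) * lam))\<^sup>2 = A * dt\<^sup>2 * lam\<^sup>2 * (g + 1/2)\<^sup>2"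
        by (simp add: power_mult_distrib mult_ac)
      ultimately have "A * dt\<^sup>2 * lam\<^sup>2 * (g + 1/2)\<^sup>2 \<ge> A" by linarith
      then have c1: "A * dt\<^sup>2 * lam\<^sup>2 * (g + 1/2)\<^sup>2 \<ge> 2 * (g + 1/2) ^ 4 / eps\<^sup>2" using A by linarith
      have c2: "2 * (g + 1/2) ^ 4 / eps\<^sup>2 = (2 * (g + 1/2)\<^sup>2 / eps\<^sup>2) * (g + 1/2)\<^sup>2"
        by (simp add: power2_eq_square power4_eq_xxxx)
      have c3: "(2 * (g + 1/2)\<^sup>2 / eps\<^sup>2) * (g + 1/2)\<^sup>2 \<le> (A * dt\<^sup>2 * lam\<^sup>2) * (g + 1/2)\<^sup>2"
        using c1 unfolding c2 .
      have "A * dt\<^sup>2 * lam\<^sup>2 \<ge> 2 * (g + 1/2)\<^sup>2 / eps\<^sup>2"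
        by (rule mult_right_le_imp_le[OF c3]) (use gp in simp)
      moreover have "2 * (g + 1/2)\<^sup>2 / eps\<^sup>2 > (g + 1/2) * lam"
      proof -
        have "(g + 1/2) * (eps\<^sup>2 * lam) < (g + 1/2) * (2 * g + 1)" using lsmall gp by simp
        then show ?thesis using assms by (simp add: field_simps power2_eq_square)
      qed
      moreover have "1 / dt > 0" using assms by simp
      ultimately show ?thesis by linarith
    qed
    have F2: "X \<ge> 1 / dt + (eps\<^sup>2 * lam\<^sup>2 + kap * lam) / 2" using F(2) unfolding X_def L_def .
    show "X + A * dt\<^sup>2 * lam\<^sup>2 - lam / 2 - eps\<^sup>2 * lam\<^sup>2 / 2 \<ge> g * lam"
    proof -
      have "X + A * dt\<^sup>2 * lam\<^sup>2 - lam / 2 - eps\<^sup>2 * lam\<^sup>2 / 2 - g * lam =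
         (X - (1 / dt + (eps\<^sup>2 * lam\<^sup>2 + kap * lam) / 2)) + (1 / dt + A * dt\<^sup>2 * lam\<^sup>2 - (g + 1/2) * lam) + kap * lam / 2"
        by (simp add: algebra_simps)
      moreover have "X - (1 / dt + (eps\<^sup>2 * lam\<^sup>2 + kap * lam) / 2) \<ge> 0" using F2 by simp
      moreover have "1 / dt + A * dt\<^sup>2 * lam\<^sup>2 - (g + 1/2) * lam \<ge> 0" using key by simp
      moreover have "kap * lam / 2 \<ge> 0" using kl by simp
      ultimately show ?thesis by linarith
    qed
  qed
qed

lemma A_bound:
  fixes eps kap A C4 gam0 alpha0 :: real
  assumes "eps > 0" "kap \<ge> 1/4" "C4 = 1 / (1 - exp (- 2))"
    "gam0 = 3 * C4 * (1 + kap)"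
    "alpha0 = ln ((gam0 + kap / 2) / (gam0 - kap / 2))"
    "A \<ge> (gam0 - kap / 4) ^ 4 / alpha0\<^sup>2 / eps\<^sup>2"
  shows "A \<ge> 2 * (gam0 + 1/2) ^ 4 / eps\<^sup>2" "C4 \<ge> 1"
proof -
  have e: "0 < exp (- 2::real)" "exp (- 2::real) < 1" by auto
  have e2: "0 < 1 - exp (- 2::real)" "1 - exp (- 2::real) \<le> 1" using e by auto
  show C: "C4 \<ge> 1" unfolding assms(3) using e2 by (simp add: le_divide_eq)
  define g where "g = gam0"
  have "C4 * (1 + kap) \<ge> 1 * (1 + kap)" using C assms(2) by (intro mult_right_mono) auto
  then have g3: "g \<ge> 3 + 3 * kap" using assms(4) unfolding g_def by simp
  have k0: "kap > 0" using assms by simp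
  have gk: "g - kap / 2 > 0" using g3 k0 by simp
  have ratio: "(g + kap / 2) / (g - kap / 2) > 1" using gk k0 by (simp add: field_simps)
  have a0: "alpha0 > 0" using ratio assms(5) unfolding g_def by simp
  have a1: "alpha0 \<le> kap / (g - kap / 2)"
  proof -
    have "alpha0 \<le> (g + kap / 2) / (g - kap / 2) - 1"
      using ln_le_minus_one[of "(g + kap / 2) / (g - kap / 2)"] ratio assms(5) unfolding g_def by simp
    also have "\<dots> = kap / (g - kap / 2)" using gk by (simp add: field_simps)
    finally show ?thesis .
  qed
  have a2: "alpha0\<^sup>2 \<le> kap\<^sup>2 / (g - kap / 2)\<^sup>2"
    using power_mono[OF a1, of 2] a0 by (simp add: power_divide)
  have p1: "g - kap / 4 \<ge> 11 / 12 * g" using g3 k0 by simp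
  have p2: "g - kap / 2 \<ge> 5 / 2 * kap" using g3 k0 by simp
  have p3: "g + 1/2 \<le> 7 / 6 * g" using g3 k0 by simp
  have gp: "g > 0" using g3 k0 by simp
  have q1: "(g - kap / 4) ^ 4 \<ge> (11 / 12 * g) ^ 4" using p1 gp by (intro power_mono) auto
  have q2: "(g - kap / 2)\<^sup>2 \<ge> (5 / 2 * kap)\<^sup>2" using p2 k0 by (intro power_mono) auto
  have q3: "(g + 1/2) ^ 4 \<le> (7 / 6 * g) ^ 4" using p3 gp by (intro power_mono) auto
  have main: "(g - kap / 4) ^ 4 * (g - kap / 2)\<^sup>2 \<ge> 2 * kap\<^sup>2 * (g + 1/2) ^ 4"
  proof -
    have "2 * kap\<^sup>2 * (g + 1/2) ^ 4 \<le> 2 * kap\<^sup>2 * (7 / 6 * g) ^ 4" using q3 by (intro mult_left_mono) simp_all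
    also have "\<dots> \<le> (11 / 12 * g) ^ 4 * (5 / 2 * kap)\<^sup>2"
      using gp k0 by (simp add: power_mult_distrib power2_eq_square power4_eq_xxxx)
    also have "\<dots> \<le> (g - kap / 4) ^ 4 * (g - kap / 2)\<^sup>2"
      using q1 q2 by (intro mult_mono) auto
    finally show ?thesis .
  qed
  have "(g - kap / 4) ^ 4 / alpha0\<^sup>2 \<ge> (g - kap / 4) ^ 4 / (kap\<^sup>2 / (g - kap / 2)\<^sup>2)"
    using a2 a0 k0 gk by (intro divide_left_mono) auto
  also have "(g - kap / 4) ^ 4 / (kap\<^sup>2 / (g - kap / 2)\<^sup>2) = (g - kap / 4) ^ 4 * (g - kap / 2)\<^sup>2 / kap\<^sup>2"
    using k0 gk by (simp add: field_simps)
  finally have f1: "(g - kap / 4) ^ 4 / alpha0\<^sup>2 \<ge> (g - kap / 4) ^ 4 * (g - kap / 2)\<^sup>2 / kap\<^sup>2" .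
  have "2 * (g + 1/2) ^ 4 * kap\<^sup>2 \<le> (g - kap / 4) ^ 4 * (g - kap / 2)\<^sup>2" using main by (simp add: mult_ac)
  then have "2 * (g + 1/2) ^ 4 \<le> (g - kap / 4) ^ 4 * (g - kap / 2)\<^sup>2 / kap\<^sup>2"
    using k0 by (simp add: pos_le_divide_eq)
  with f1 have "(g - kap / 4) ^ 4 / alpha0\<^sup>2 \<ge> 2 * (g + 1/2) ^ 4" by linarith
  then have "(g - kap / 4) ^ 4 / alpha0\<^sup>2 / eps\<^sup>2 \<ge> 2 * (g + 1/2) ^ 4 / eps\<^sup>2"
    by (rule divide_right_mono) (use assms(1) in simp)
  then show "A \<ge> 2 * (gam0 + 1/2) ^ 4 / eps\<^sup>2" using assms(6) unfolding g_def by linarith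
qed


lemma conc_1d:
  fixes s t :: real
  assumes "s \<ge> 0" "t \<ge> 0"
  shows "(s\<^sup>2 - t\<^sup>2) / (2 * (1 + t\<^sup>2)) + (s * t - s\<^sup>2) / (1 + s\<^sup>2) \<le> (s - t)\<^sup>2 / 2"
proof -
  have p1: "1 + s\<^sup>2 > 0" "1 + t\<^sup>2 > 0" by (auto intro: add_pos_nonneg)
  have num: "(s\<^sup>2 - t\<^sup>2) * (1 + s\<^sup>2) + 2 * (s * t - s\<^sup>2) * (1 + t\<^sup>2) = (s - t)\<^sup>2 * (s\<^sup>2 + 2 * s * t - 1)"
    by (simp add: power2_eq_square algebra_simps)
  have f: "s\<^sup>2 + 2 * s * t - 1 \<le> (1 + s\<^sup>2) * (1 + t\<^sup>2)"
  proof -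
    have "0 \<le> (s * t - 1)\<^sup>2 + t\<^sup>2 + 1" by simp
    then show ?thesis by (simp add: power2_eq_square algebra_simps)
  qed
  have "(s - t)\<^sup>2 * (s\<^sup>2 + 2 * s * t - 1) \<le> (s - t)\<^sup>2 * ((1 + s\<^sup>2) * (1 + t\<^sup>2))"
    using f by (intro mult_left_mono) auto
  then have "(s\<^sup>2 - t\<^sup>2) * (1 + s\<^sup>2) + 2 * (s * t - s\<^sup>2) * (1 + t\<^sup>2) \<le> (s - t)\<^sup>2 * ((1 + s\<^sup>2) * (1 + t\<^sup>2))"
    using num by simp
  then have n: "(s\<^sup>2 - t\<^sup>2) * (1 + s\<^sup>2) + 2 * (s * t - s\<^sup>2) * (1 + t\<^sup>2) \<le> (s - t)\<^sup>2 / 2 * (2 * ((1 + s\<^sup>2) * (1 + t\<^sup>2)))"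
    by simp
  have D: "2 * ((1 + s\<^sup>2) * (1 + t\<^sup>2)) > 0" using p1 by simp
  have eq: "(s\<^sup>2 - t\<^sup>2) / (2 * (1 + t\<^sup>2)) + (s * t - s\<^sup>2) / (1 + s\<^sup>2)
      = ((s\<^sup>2 - t\<^sup>2) * (1 + s\<^sup>2) + 2 * (s * t - s\<^sup>2) * (1 + t\<^sup>2)) / (2 * ((1 + s\<^sup>2) * (1 + t\<^sup>2)))"
    using p1 by (simp add: field_simps)
  show ?thesis unfolding eq using n D by (simp add: pos_divide_le_eq)
qed


lemma cs2: fixes a b c d :: real
  shows "a * c + b * d \<le> sqrt (a\<^sup>2 + b\<^sup>2) * sqrt (c\<^sup>2 + d\<^sup>2)"
proof -
  have "(a * c + b * d)\<^sup>2 \<le> (a\<^sup>2 + b\<^sup>2) * (c\<^sup>2 + d\<^sup>2)"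
  proof -
    have "0 \<le> (a * d - b * c)\<^sup>2" by simp
    then show ?thesis by (simp add: power2_eq_square algebra_simps)
  qed
  then have "sqrt ((a * c + b * d)\<^sup>2) \<le> sqrt ((a\<^sup>2 + b\<^sup>2) * (c\<^sup>2 + d\<^sup>2))" by (rule real_sqrt_le_mono)
  then have "\<bar>a * c + b * d\<bar> \<le> sqrt (a\<^sup>2 + b\<^sup>2) * sqrt (c\<^sup>2 + d\<^sup>2)" by (simp add: real_sqrt_mult)
  then show ?thesis by simp
qed

lemma lin_helper:
  fixes A B C P Q st cc :: real
  shows "A + B \<le> (P + Q - 2 * st) / 2 \<Longrightarrow> C + cc \<le> B + st \<Longrightarrow> A + C \<le> (P + Q - 2 * cc) / 2"
  by (simp add: field_simps)

lemma sq_id: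
  fixes x1 x2 y1 y2 a b c d k :: real
  shows "((x1 + k * a) - (y1 + k * c))\<^sup>2 + ((x2 + k * b) - (y2 + k * d))\<^sup>2
    = ((x1 - y1)\<^sup>2 + (x2 - y2)\<^sup>2) + 2 * k * ((x1 - y1) * (a - c) + (x2 - y2) * (b - d)) + k\<^sup>2 * ((a - c)\<^sup>2 + (b - d)\<^sup>2)"
  by (simp add: power2_eq_square algebra_simps)

lemma lin2:
  fixes L U A B M :: real
  shows "L \<le> U \<Longrightarrow> U = 2 * A \<Longrightarrow> A + B \<le> M \<Longrightarrow> L \<le> 2 * (M - B)"
  by (simp add: algebra_simps)

lemma lin3:
  fixes lp lq R X :: real
  shows "lp - lq \<le> 2 * (R / 2 - X) \<Longrightarrow> - 1/2 * lq \<le> - 1/2 * lp - X + 1/2 * R"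
  by (simp add: field_simps)

lemma conc_2d:
  fixes a b c d :: real
  shows "- 1/2 * ln (1 + c\<^sup>2 + d\<^sup>2) \<le> - 1/2 * ln (1 + a\<^sup>2 + b\<^sup>2)
     - (a / (1 + a\<^sup>2 + b\<^sup>2)) * (c - a) - (b / (1 + a\<^sup>2 + b\<^sup>2)) * (d - b) + 1/2 * ((c - a)\<^sup>2 + (d - b)\<^sup>2)"
proof -
  define P where "P = a\<^sup>2 + b\<^sup>2"
  define Q where "Q = c\<^sup>2 + d\<^sup>2"
  define cc where "cc = a * c + b * d"
  define s where "s = sqrt P"
  define t where "t = sqrt Q"
  have P0: "P \<ge> 0" "Q \<ge> 0" by (simp_all add: P_def Q_def)
  have st: "s \<ge> 0" "t \<ge> 0" "s\<^sup>2 = P" "t\<^sup>2 = Q" using P0 by (simp_all add: s_def t_def)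
  have ccst: "cc \<le> s * t" unfolding cc_def s_def t_def P_def Q_def by (rule cs2)
  have ln1: "ln (1 + P) - ln (1 + Q) \<le> (P - Q) / (1 + Q)"
  proof -
    have "ln (1 + P) - ln (1 + Q) = ln ((1 + P) / (1 + Q))" using P0 by (simp add: ln_div)
    also have "\<dots> \<le> (1 + P) / (1 + Q) - 1" using P0 by (intro ln_le_minus_one) simp
    also have "\<dots> = (P - Q) / (1 + Q)" using P0 by (simp add: field_simps)
    finally show ?thesis .
  qed
  have d2e: "(s - t)\<^sup>2 = P + Q - 2 * (s * t)" using st by (simp add: power2_eq_square algebra_simps)
  have c1: "(P - Q) / (2 * (1 + Q)) + (s * t - P) / (1 + P) \<le> (P + Q - 2 * (s * t)) / 2"
    using conc_1d[OF st(1,2)] unfolding st(3,4) d2e by simp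
  have c2: "(cc - P) / (1 + P) + cc \<le> (s * t - P) / (1 + P) + s * t"
  proof -
    have "(cc - P) / (1 + P) \<le> (s * t - P) / (1 + P)" using ccst P0 by (intro divide_right_mono) auto
    then show ?thesis using ccst by linarith
  qed
  have main: "(P - Q) / (2 * (1 + Q)) + (cc - P) / (1 + P) \<le> (P + Q - 2 * cc) / 2"
    by (rule lin_helper[OF c1 c2])
  have e1: "(c - a)\<^sup>2 + (d - b)\<^sup>2 = P + Q - 2 * cc"
    by (simp add: P_def Q_def cc_def power2_eq_square algebra_simps)
  have e2: "(a / (1 + a\<^sup>2 + b\<^sup>2)) * (c - a) + (b / (1 + a\<^sup>2 + b\<^sup>2)) * (d - b) = (cc - P) / (1 + P)"
    by (simp add: P_def cc_def add_divide_distrib[symmetric] diff_divide_distrib algebra_simps power2_eq_square)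
  have "ln (1 + P) - ln (1 + Q) \<le> 2 * ((P + Q - 2 * cc) / 2 - (cc - P) / (1 + P))"
  proof -
    have "(P - Q) / (1 + Q) = 2 * ((P - Q) / (2 * (1 + Q)))" using P0 by (simp add: field_simps)
    then show ?thesis by (rule lin2[OF ln1 _ main])
  qed
  then have "- 1/2 * ln (1 + Q) \<le> - 1/2 * ln (1 + P) - ((a / (1 + a\<^sup>2 + b\<^sup>2)) * (c - a) + (b / (1 + a\<^sup>2 + b\<^sup>2)) * (d - b)) + 1/2 * ((c - a)\<^sup>2 + (d - b)\<^sup>2)"
    unfolding e1 e2 by (rule lin3)
  then show ?thesis by (simp add: P_def Q_def add.assoc diff_diff_eq)
qed

lemma lip_1d:
  fixes s t :: real
  shows "(s / (1 + s\<^sup>2) - t / (1 + t\<^sup>2))\<^sup>2 \<le> (s - t)\<^sup>2"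
proof -
  have p1: "1 + s\<^sup>2 > 0" "1 + t\<^sup>2 > 0" by (auto intro: add_pos_nonneg)
  have eq: "s / (1 + s\<^sup>2) - t / (1 + t\<^sup>2) = (s - t) * (1 - s * t) / ((1 + s\<^sup>2) * (1 + t\<^sup>2))"
    using p1 by (simp add: field_simps) (simp add: power2_eq_square algebra_simps)
  have b: "\<bar>1 - s * t\<bar> \<le> (1 + s\<^sup>2) * (1 + t\<^sup>2)"
  proof -
    have "\<bar>1 - s * t\<bar> \<le> 1 + \<bar>s * t\<bar>" by linarith
    also have "\<bar>s * t\<bar> \<le> s\<^sup>2 + t\<^sup>2 + s\<^sup>2 * t\<^sup>2"
    proof -
      have "0 \<le> (\<bar>s\<bar> - \<bar>t\<bar>)\<^sup>2" by simp
      then have "2 * \<bar>s * t\<bar> \<le> s\<^sup>2 + t\<^sup>2" by (simp add: power2_diff abs_mult)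
      moreover have "0 \<le> s\<^sup>2 * t\<^sup>2" by simp
      moreover have "0 \<le> \<bar>s * t\<bar>" by simp
      ultimately show ?thesis by linarith
    qed
    finally show ?thesis by (simp add: algebra_simps)
  qed
  have "\<bar>s / (1 + s\<^sup>2) - t / (1 + t\<^sup>2)\<bar> \<le> \<bar>s - t\<bar>"
  proof -
    have "\<bar>s / (1 + s\<^sup>2) - t / (1 + t\<^sup>2)\<bar> = \<bar>s - t\<bar> * (\<bar>1 - s * t\<bar> / ((1 + s\<^sup>2) * (1 + t\<^sup>2)))"
      unfolding eq using p1 by (simp add: abs_mult abs_divide)
    also have "\<dots> \<le> \<bar>s - t\<bar> * 1" using b p1 by (intro mult_left_mono) auto
    finally show ?thesis by simp
  qed
  then show ?thesis by (metis abs_ge_zero power2_abs power_mono)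
qed

lemma lip_2d:
  fixes a b c d :: real
  shows "(a / (1 + a\<^sup>2 + b\<^sup>2) - c / (1 + c\<^sup>2 + d\<^sup>2))\<^sup>2 + (b / (1 + a\<^sup>2 + b\<^sup>2) - d / (1 + c\<^sup>2 + d\<^sup>2))\<^sup>2
    \<le> (a - c)\<^sup>2 + (b - d)\<^sup>2"
proof -
  define P where "P = a\<^sup>2 + b\<^sup>2"
  define Q where "Q = c\<^sup>2 + d\<^sup>2"
  define cc where "cc = a * c + b * d"
  define s where "s = sqrt P"
  define t where "t = sqrt Q"
  have P0: "P \<ge> 0" "Q \<ge> 0" by (simp_all add: P_def Q_def)
  have st: "s \<ge> 0" "t \<ge> 0" "s\<^sup>2 = P" "t\<^sup>2 = Q" using P0 by (simp_all add: s_def t_def)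
  have ccst: "cc \<le> s * t" unfolding cc_def s_def t_def P_def Q_def by (rule cs2)
  have p1: "1 + P > 0" "1 + Q > 0" using P0 by auto
  define al where "al = 1 / (1 + P)"
  define be where "be = 1 / (1 + Q)"
  have ab0: "al > 0" "be > 0" using p1 by (auto simp: al_def be_def)
  have sa: "a / (1 + a\<^sup>2 + b\<^sup>2) = a * al" "b / (1 + a\<^sup>2 + b\<^sup>2) = b * al"
    "c / (1 + c\<^sup>2 + d\<^sup>2) = c * be" "d / (1 + c\<^sup>2 + d\<^sup>2) = d * be"
    by (simp_all add: al_def be_def P_def Q_def add.assoc)
  have L: "(a * al - c * be)\<^sup>2 + (b * al - d * be)\<^sup>2 = P * al\<^sup>2 + Q * be\<^sup>2 - 2 * cc * (al * be)"
    by (simp add: P_def Q_def cc_def power2_eq_square algebra_simps)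
  have R: "(a - c)\<^sup>2 + (b - d)\<^sup>2 = P + Q - 2 * cc"
    by (simp add: P_def Q_def cc_def power2_eq_square algebra_simps)
  have one: "al * be \<le> 1"
  proof -
    have "al \<le> 1" "be \<le> 1" using P0 by (auto simp: al_def be_def)
    then show ?thesis using ab0 by (simp add: mult_le_one)
  qed
  have d1: "(s / (1 + s\<^sup>2) - t / (1 + t\<^sup>2))\<^sup>2 \<le> (s - t)\<^sup>2" by (rule lip_1d)
  have d1e: "(s / (1 + s\<^sup>2) - t / (1 + t\<^sup>2))\<^sup>2 = P * al\<^sup>2 + Q * be\<^sup>2 - 2 * (s * t) * (al * be)"
  proof -
    have "s / (1 + s\<^sup>2) = s * al" by (simp add: al_def st(3))
    moreover have "t / (1 + t\<^sup>2) = t * be" by (simp add: be_def st(4))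
    moreover have "(s * al - t * be)\<^sup>2 = s\<^sup>2 * al\<^sup>2 + t\<^sup>2 * be\<^sup>2 - 2 * (s * t) * (al * be)"
      by (simp add: power2_eq_square algebra_simps)
    ultimately show ?thesis using st(3,4) by simp
  qed
  have d2e: "(s - t)\<^sup>2 = P + Q - 2 * (s * t)" using st by (simp add: power2_eq_square algebra_simps)
  have "cc * (1 - al * be) \<le> s * t * (1 - al * be)"
    using ccst one by (intro mult_right_mono) auto
  then show ?thesis unfolding sa L R using d1 d1e d2e by (simp add: algebra_simps)
qed

lemma lipH:
  fixes a b c d kap :: real
  assumes "kap \<ge> 0"
  shows "((a / (1 + a\<^sup>2 + b\<^sup>2) + kap * a) - (c / (1 + c\<^sup>2 + d\<^sup>2) + kap * c))\<^sup>2
       + ((b / (1 + a\<^sup>2 + b\<^sup>2) + kap * b) - (d / (1 + c\<^sup>2 + d\<^sup>2) + kap * d))\<^sup>2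
    \<le> (1 + kap)\<^sup>2 * ((a - c)\<^sup>2 + (b - d)\<^sup>2)"
proof -
  define u1 where "u1 = a / (1 + a\<^sup>2 + b\<^sup>2) - c / (1 + c\<^sup>2 + d\<^sup>2)"
  define u2 where "u2 = b / (1 + a\<^sup>2 + b\<^sup>2) - d / (1 + c\<^sup>2 + d\<^sup>2)"
  define r1 where "r1 = a - c"
  define r2 where "r2 = b - d"
  have U: "u1\<^sup>2 + u2\<^sup>2 \<le> r1\<^sup>2 + r2\<^sup>2" unfolding u1_def u2_def r1_def r2_def by (rule lip_2d)
  have cross: "u1 * r1 + u2 * r2 \<le> r1\<^sup>2 + r2\<^sup>2"
  proof -
    have "0 \<le> (u1 - r1)\<^sup>2 + (u2 - r2)\<^sup>2" by simp
    then have "2 * (u1 * r1 + u2 * r2) \<le> u1\<^sup>2 + u2\<^sup>2 + r1\<^sup>2 + r2\<^sup>2" by (simp add: power2_eq_square algebra_simps)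
    then have "2 * (u1 * r1 + u2 * r2) \<le> 2 * (r1\<^sup>2 + r2\<^sup>2)" using U by simp
    then show ?thesis by simp
  qed
  have e: "((a / (1 + a\<^sup>2 + b\<^sup>2) + kap * a) - (c / (1 + c\<^sup>2 + d\<^sup>2) + kap * c))\<^sup>2
       + ((b / (1 + a\<^sup>2 + b\<^sup>2) + kap * b) - (d / (1 + c\<^sup>2 + d\<^sup>2) + kap * d))\<^sup>2
     = (u1\<^sup>2 + u2\<^sup>2) + 2 * kap * (u1 * r1 + u2 * r2) + kap\<^sup>2 * (r1\<^sup>2 + r2\<^sup>2)"
    unfolding u1_def u2_def r1_def r2_def by (rule sq_id)
  have "2 * kap * (u1 * r1 + u2 * r2) \<le> 2 * kap * (r1\<^sup>2 + r2\<^sup>2)" using cross assms by (intro mult_left_mono) auto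
  then show ?thesis unfolding e using U
    by (simp add: r1_def[symmetric] r2_def[symmetric] power2_eq_square algebra_simps)
qed

lemma young2:
  fixes a1 a2 b1 b2 g1 g2 kap th :: real
  assumes "kap \<ge> 0" "th > 0" "a1\<^sup>2 + a2\<^sup>2 \<le> (1 + kap)\<^sup>2 * (g1\<^sup>2 + g2\<^sup>2)"
  shows "a1 * b1 + a2 * b2 \<le> (1 + kap) * (th / 2 * (g1\<^sup>2 + g2\<^sup>2) + (b1\<^sup>2 + b2\<^sup>2) / (2 * th))"
proof -
  define sg where "sg = th / (1 + kap)"
  have sp: "sg > 0" using assms by (simp add: sg_def)
  have "0 \<le> (sg * a1 - b1)\<^sup>2 + (sg * a2 - b2)\<^sup>2" by simp
  then have "2 * sg * (a1 * b1 + a2 * b2) \<le> sg\<^sup>2 * (a1\<^sup>2 + a2\<^sup>2) + (b1\<^sup>2 + b2\<^sup>2)"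
    by (simp add: power2_eq_square algebra_simps)
  also have "\<dots> \<le> sg\<^sup>2 * ((1 + kap)\<^sup>2 * (g1\<^sup>2 + g2\<^sup>2)) + (b1\<^sup>2 + b2\<^sup>2)"
    using assms(3) by (simp add: mult_left_mono)
  finally have h: "2 * sg * (a1 * b1 + a2 * b2) \<le> sg\<^sup>2 * ((1 + kap)\<^sup>2 * (g1\<^sup>2 + g2\<^sup>2)) + (b1\<^sup>2 + b2\<^sup>2)" .
  have k1: "1 + kap > 0" using assms by simp
  have sq: "sg\<^sup>2 * ((1 + kap)\<^sup>2 * (g1\<^sup>2 + g2\<^sup>2)) = th\<^sup>2 * (g1\<^sup>2 + g2\<^sup>2)"
    using k1 unfolding sg_def by (simp add: power_divide)
  have "a1 * b1 + a2 * b2 \<le> (th\<^sup>2 * (g1\<^sup>2 + g2\<^sup>2) + (b1\<^sup>2 + b2\<^sup>2)) / (2 * sg)"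
    using h sp unfolding sq by (simp add: pos_le_divide_eq mult_ac)
  also have "(th\<^sup>2 * (g1\<^sup>2 + g2\<^sup>2) + (b1\<^sup>2 + b2\<^sup>2)) / (2 * sg) = (1 + kap) * (th / 2 * (g1\<^sup>2 + g2\<^sup>2) + (b1\<^sup>2 + b2\<^sup>2) / (2 * th))"
    using k1 assms(2) unfolding sg_def by (simp add: field_simps power2_eq_square)
  finally show ?thesis .
qed


lemma mode_id:
  fixes C0 C1 Nh F0 F1 F2 :: complex and lam Lam dt A eps kap x G0 G1 G2 :: real
  assumes sch: "C1 = of_real (exp (- x)) * C0 - of_real (A * dt ^ 3 * G0 * lam\<^sup>2) * (C1 - C0)
     - of_real (dt * G0) * F0
     - of_real (dt * G1) * (3/2 * F0 - 2 * F1 + 1/2 * F2)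
     - of_real (dt * G2) * (1/2 * F0 - F1 + 1/2 * F2)"
    and fN: "F0 = Nh - of_real (kap * lam) * C0"
    and xg: "x * G0 = 1 - exp (- x)" and xd: "x = dt * Lam" and Ld: "Lam = eps\<^sup>2 * lam\<^sup>2 + kap * lam"
    and G0p: "G0 > 0" and dtp: "dt > 0"
  shows "Nh = - of_real (1 / (dt * G0) + A * dt\<^sup>2 * lam\<^sup>2) * (C1 - C0) - of_real (eps\<^sup>2 * lam\<^sup>2) * C0
     - of_real ((3/2 * G1 + 1/2 * G2) / G0) * (F0 - F1) + of_real ((1/2 * G1 + 1/2 * G2) / G0) * (F1 - F2)"
proof -
  have f1: "of_real (1 / (dt * G0)) * of_real dt * of_real G0 = (1::complex)"
    using G0p dtp by (simp flip: of_real_mult)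
  have r2: "(3/2 * G1 + 1/2 * G2) / G0 * G0 = 3/2 * G1 + 1/2 * G2" using G0p by simp
  have f2: "of_real ((3/2 * G1 + 1/2 * G2) / G0) * of_real G0 = 3/2 * of_real G1 + 1/2 * (of_real G2 :: complex)"
    using arg_cong[OF r2, of "complex_of_real"] G0p by simp
  have r3: "(1/2 * G1 + 1/2 * G2) / G0 * G0 = 1/2 * G1 + 1/2 * G2" using G0p by simp
  have f3: "of_real ((1/2 * G1 + 1/2 * G2) / G0) * of_real G0 = 1/2 * of_real G1 + 1/2 * (of_real G2 :: complex)"
    using arg_cong[OF r3, of "complex_of_real"] G0p by simp
  have f4: "of_real (exp (- x)) = 1 - of_real dt * (of_real eps ^ 2 * of_real lam ^ 2 + of_real kap * of_real lam) * (of_real G0 :: complex)"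
  proof -
    have "exp (- x) = 1 - dt * (eps\<^sup>2 * lam\<^sup>2 + kap * lam) * G0" using xg xd Ld by simp
    then show ?thesis by simp
  qed
  note sch' = sch[unfolded of_real_mult of_real_power f4]
  note fN' = fN[unfolded of_real_mult]
  show ?thesis
    unfolding of_real_add of_real_mult of_real_power
    using sch' fN' f1 f2 f3 by algebra
qed

lemma mode_ineq_c:
  fixes Nh C0 C1 D1 D2 :: complex and R E p1 p2 lam g :: real
  assumes id: "Nh = - of_real R * (C1 - C0) - of_real E * C0 - of_real p1 * D1 + of_real p2 * D2"
    and co: "R - lam / 2 - E / 2 \<ge> g * lam"
  shows "Re (Nh * cnj (C1 - C0)) + lam / 2 * (cmod (C1 - C0))\<^sup>2 + E / 2 * ((cmod C1)\<^sup>2 - (cmod C0)\<^sup>2)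
    \<le> - (g * lam) * (cmod (C1 - C0))\<^sup>2 - Re (of_real p1 * D1 * cnj (C1 - C0)) + Re (of_real p2 * D2 * cnj (C1 - C0))"
proof -
  define d where "d = C1 - C0"
  have C1e: "C1 = C0 + d" by (simp add: d_def)
  have dd: "d * cnj d = of_real ((cmod d)\<^sup>2)" by (simp add: complex_mult_cnj cmod_power2)
  have h1: "Re (Nh * cnj d) = - R * (cmod d)\<^sup>2 - E * Re (C0 * cnj d) - Re (of_real p1 * D1 * cnj d) + Re (of_real p2 * D2 * cnj d)"
  proof -
    have "Nh * cnj d = - of_real R * (d * cnj d) - of_real E * (C0 * cnj d) - of_real p1 * D1 * cnj d + of_real p2 * D2 * cnj d"
      unfolding id d_def[symmetric] by (simp add: algebra_simps)
    then show ?thesis unfolding dd by simp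
  qed
  have h2: "(cmod C1)\<^sup>2 - (cmod C0)\<^sup>2 = (cmod d)\<^sup>2 + 2 * Re (C0 * cnj d)"
    unfolding C1e cmod_power2 by (simp add: power2_eq_square algebra_simps)
  have "Re (Nh * cnj d) + lam / 2 * (cmod d)\<^sup>2 + E / 2 * ((cmod C1)\<^sup>2 - (cmod C0)\<^sup>2)
      = - (R - lam / 2 - E / 2) * (cmod d)\<^sup>2 - Re (of_real p1 * D1 * cnj d) + Re (of_real p2 * D2 * cnj d)"
    unfolding h1 h2 by (simp add: algebra_simps)
  also have "\<dots> \<le> - (g * lam) * (cmod d)\<^sup>2 - Re (of_real p1 * D1 * cnj d) + Re (of_real p2 * D2 * cnj d)"
    using mult_right_mono[OF co, of "(cmod d)\<^sup>2"] by (simp add: algebra_simps)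
  finally show ?thesis unfolding d_def .
qed


abbreviation mx :: "int \<Rightarrow> complex" where "mx k \<equiv> complex_of_real (2 * pi) * \<i> * of_int k"

lemma ipN_nonneg: "ipN K f f \<ge> 0"
  unfolding ipN_def by (simp add: sum_nonneg)

lemma cmod_mx: "(cmod (mx k * z))\<^sup>2 = (2 * of_int k * pi)\<^sup>2 * (cmod z)\<^sup>2"
  by (simp add: norm_mult power_mult_distrib)

lemma cmodDx: "k \<in> II K \<Longrightarrow> l \<in> II K \<Longrightarrow>
  (cmod (fcoef K (DNx K f) k l))\<^sup>2 = (2 * of_int k * pi)\<^sup>2 * (cmod (fcoef K f k l))\<^sup>2"
  by (simp add: cDx norm_mult power_mult_distrib)
lemma cmodDy: "k \<in> II K \<Longrightarrow> l \<in> II K \<Longrightarrow>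
  (cmod (fcoef K (DNy K f) k l))\<^sup>2 = (2 * of_int l * pi)\<^sup>2 * (cmod (fcoef K f k l))\<^sup>2"
  by (simp add: cDy norm_mult power_mult_distrib)

lemma gradsq: "(gradnorm2N K f)\<^sup>2 = (\<Sum>k\<in>II K. \<Sum>l\<in>II K. lam k l * (cmod (fcoef K f k l))\<^sup>2)"
proof -
  have nn: "ipN K (DNx K f) (DNx K f) + ipN K (DNy K f) (DNy K f) \<ge> 0"
    using ipN_nonneg[of K "DNx K f"] ipN_nonneg[of K "DNy K f"] by simp
  have "(gradnorm2N K f)\<^sup>2 = ipN K (DNx K f) (DNx K f) + ipN K (DNy K f) (DNy K f)"
    unfolding gradnorm2N_def using nn by simp
  also have "\<dots> = (\<Sum>k\<in>II K. \<Sum>l\<in>II K. (2 * of_int k * pi)\<^sup>2 * (cmod (fcoef K f k l))\<^sup>2)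
     + (\<Sum>k\<in>II K. \<Sum>l\<in>II K. (2 * of_int l * pi)\<^sup>2 * (cmod (fcoef K f k l))\<^sup>2)"
    unfolding parseval_sq by (simp add: cmodDx cmodDy cong: sum.cong)
  also have "\<dots> = (\<Sum>k\<in>II K. \<Sum>l\<in>II K. lam k l * (cmod (fcoef K f k l))\<^sup>2)"
    by (simp add: lam_def sum.distrib[symmetric] algebra_simps)
  finally show ?thesis .
qed

lemma lapsq: "(norm2N K (LapN K f))\<^sup>2 = (\<Sum>k\<in>II K. \<Sum>l\<in>II K. (lam k l)\<^sup>2 * (cmod (fcoef K f k l))\<^sup>2)"
proof -
  have "(norm2N K (LapN K f))\<^sup>2 = ipN K (LapN K f) (LapN K f)"
    unfolding norm2N_def using ipN_nonneg by simp
  also have "\<dots> = (\<Sum>k\<in>II K. \<Sum>l\<in>II K. (lam k l)\<^sup>2 * (cmod (fcoef K f k l))\<^sup>2)"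
    unfolding parseval_sq by (simp add: cLap norm_mult power_mult_distrib cong: sum.cong)
  finally show ?thesis .
qed

lemma re_imag: "Re (a * cnj (mx k * z)) = - Re (mx k * a * cnj z)"
  by (simp add: algebra_simps)

lemma ipg_modes:
  "ipN K A1 (DNx K B) + ipN K A2 (DNy K B)
    = (\<Sum>k\<in>II K. \<Sum>l\<in>II K. - Re ((mx k * fcoef K A1 k l + mx l * fcoef K A2 k l) * cnj (fcoef K B k l)))"
proof -
  have "ipN K A1 (DNx K B) + ipN K A2 (DNy K B)
     = (\<Sum>k\<in>II K. \<Sum>l\<in>II K. Re (fcoef K A1 k l * cnj (mx k * fcoef K B k l)) + Re (fcoef K A2 k l * cnj (mx l * fcoef K B k l)))"
    unfolding parseval by (simp add: Re_sum cDx cDy sum.distrib cong: sum.cong)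
  also have "\<dots> = (\<Sum>k\<in>II K. \<Sum>l\<in>II K. - Re ((mx k * fcoef K A1 k l + mx l * fcoef K A2 k l) * cnj (fcoef K B k l)))"
    unfolding re_imag by (simp add: algebra_simps)
  finally show ?thesis .
qed


lemma gradsq_ip: "(gradnorm2N K f)\<^sup>2 = ipN K (DNx K f) (DNx K f) + ipN K (DNy K f) (DNy K f)"
proof -
  have nn: "ipN K (DNx K f) (DNx K f) + ipN K (DNy K f) (DNy K f) \<ge> 0"
    using ipN_nonneg[of K "DNx K f"] ipN_nonneg[of K "DNy K f"] by simp
  then show ?thesis unfolding gradnorm2N_def by simp
qed

lemma DNx_gsub: "DNx K (gsub f g) i j = DNx K f i j - DNx K g i j"
  unfolding DNx_def gsub_def by (rule fmult_diff)
lemma DNy_gsub: "DNy K (gsub f g) i j = DNy K f i j - DNy K g i j"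
  unfolding DNy_def gsub_def by (rule fmult_diff)

lemma ln_part:
  "(hh K)\<^sup>2 * (\<Sum>i<NN K. \<Sum>j<NN K. - 1/2 * ln (1 + (DNx K u1 i j)\<^sup>2 + (DNy K u1 i j)\<^sup>2))
   \<le> (hh K)\<^sup>2 * (\<Sum>i<NN K. \<Sum>j<NN K. - 1/2 * ln (1 + (DNx K u0 i j)\<^sup>2 + (DNy K u0 i j)\<^sup>2))
     - (ipN K (Fx K u0) (DNx K (gsub u1 u0)) + ipN K (Fy K u0) (DNy K (gsub u1 u0)))
     + 1/2 * (gradnorm2N K (gsub u1 u0))\<^sup>2"
proof -
  let ?L1 = "\<lambda>i j. - 1/2 * ln (1 + (DNx K u1 i j)\<^sup>2 + (DNy K u1 i j)\<^sup>2)"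
  let ?L0 = "\<lambda>i j. - 1/2 * ln (1 + (DNx K u0 i j)\<^sup>2 + (DNy K u0 i j)\<^sup>2)"
  let ?B = "\<lambda>i j. Fx K u0 i j * DNx K (gsub u1 u0) i j + Fy K u0 i j * DNy K (gsub u1 u0) i j"
  let ?C = "\<lambda>i j. (DNx K (gsub u1 u0) i j)\<^sup>2 + (DNy K (gsub u1 u0) i j)\<^sup>2"
  have pw: "?L1 i j \<le> ?L0 i j - ?B i j + 1/2 * ?C i j" for i j
    using conc_2d[of "DNx K u1 i j" "DNy K u1 i j" "DNx K u0 i j" "DNy K u0 i j"]
    unfolding DNx_gsub DNy_gsub Fx_def Fy_def by (simp add: algebra_simps)
  have "(\<Sum>i<NN K. \<Sum>j<NN K. ?L1 i j) \<le> (\<Sum>i<NN K. \<Sum>j<NN K. ?L0 i j - ?B i j + 1/2 * ?C i j)"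
    by (intro sum_mono) (rule pw)
  also have "\<dots> = (\<Sum>i<NN K. \<Sum>j<NN K. ?L0 i j) - (\<Sum>i<NN K. \<Sum>j<NN K. ?B i j) + 1/2 * (\<Sum>i<NN K. \<Sum>j<NN K. ?C i j)"
    by (simp only: sum.distrib sum_subtractf sum_distrib_left distrib_left)
  finally have s: "(\<Sum>i<NN K. \<Sum>j<NN K. ?L1 i j) \<le> (\<Sum>i<NN K. \<Sum>j<NN K. ?L0 i j) - (\<Sum>i<NN K. \<Sum>j<NN K. ?B i j) + 1/2 * (\<Sum>i<NN K. \<Sum>j<NN K. ?C i j)" .
  have h0: "(hh K)\<^sup>2 \<ge> 0" by simp
  have "(hh K)\<^sup>2 * (\<Sum>i<NN K. \<Sum>j<NN K. ?L1 i j) \<le> (hh K)\<^sup>2 * ((\<Sum>i<NN K. \<Sum>j<NN K. ?L0 i j) - (\<Sum>i<NN K. \<Sum>j<NN K. ?B i j) + 1/2 * (\<Sum>i<NN K. \<Sum>j<NN K. ?C i j))"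
    using mult_left_mono[OF s h0] .
  also have "\<dots> = (hh K)\<^sup>2 * (\<Sum>i<NN K. \<Sum>j<NN K. ?L0 i j)
     - (ipN K (Fx K u0) (DNx K (gsub u1 u0)) + ipN K (Fy K u0) (DNy K (gsub u1 u0)))
     + 1/2 * (gradnorm2N K (gsub u1 u0))\<^sup>2"
  proof -
    have hB: "(\<Sum>i<NN K. \<Sum>j<NN K. ?B i j) = (\<Sum>i<NN K. \<Sum>j<NN K. Fx K u0 i j * DNx K (gsub u1 u0) i j) + (\<Sum>i<NN K. \<Sum>j<NN K. Fy K u0 i j * DNy K (gsub u1 u0) i j)"
      by (simp add: sum.distrib)
    have hC: "(\<Sum>i<NN K. \<Sum>j<NN K. ?C i j) = (\<Sum>i<NN K. \<Sum>j<NN K. DNx K (gsub u1 u0) i j * DNx K (gsub u1 u0) i j) + (\<Sum>i<NN K. \<Sum>j<NN K. DNy K (gsub u1 u0) i j * DNy K (gsub u1 u0) i j)"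
      by (simp add: sum.distrib power2_eq_square)
    show ?thesis unfolding gradsq_ip ipN_def hB hC by (simp add: algebra_simps)
  qed
  finally show ?thesis .
qed

lemma young_grid:
  assumes "kap \<ge> 0" "th > 0"
    and pw: "\<And>i j. (A1 i j)\<^sup>2 + (A2 i j)\<^sup>2 \<le> (1 + kap)\<^sup>2 * ((G1 i j)\<^sup>2 + (G2 i j)\<^sup>2)"
  shows "ipN K A1 B1 + ipN K A2 B2 \<le> (1 + kap) * (th / 2 * (ipN K G1 G1 + ipN K G2 G2) + (ipN K B1 B1 + ipN K B2 B2) / (2 * th))"
proof -
  have p: "A1 i j * B1 i j + A2 i j * B2 i j \<le> (1 + kap) * (th / 2 * ((G1 i j)\<^sup>2 + (G2 i j)\<^sup>2) + ((B1 i j)\<^sup>2 + (B2 i j)\<^sup>2) / (2 * th))" for i j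
    by (rule young2[OF assms(1,2) pw])
  have s: "(\<Sum>i<NN K. \<Sum>j<NN K. A1 i j * B1 i j + A2 i j * B2 i j) \<le>
     (\<Sum>i<NN K. \<Sum>j<NN K. (1 + kap) * (th / 2 * ((G1 i j)\<^sup>2 + (G2 i j)\<^sup>2) + ((B1 i j)\<^sup>2 + (B2 i j)\<^sup>2) / (2 * th)))"
    by (intro sum_mono) (rule p)
  have h0: "(hh K)\<^sup>2 \<ge> 0" by simp
  have "ipN K A1 B1 + ipN K A2 B2 = (hh K)\<^sup>2 * (\<Sum>i<NN K. \<Sum>j<NN K. A1 i j * B1 i j + A2 i j * B2 i j)"
    unfolding ipN_def by (simp add: sum.distrib algebra_simps)
  also have "\<dots> \<le> (hh K)\<^sup>2 * (\<Sum>i<NN K. \<Sum>j<NN K. (1 + kap) * (th / 2 * ((G1 i j)\<^sup>2 + (G2 i j)\<^sup>2) + ((B1 i j)\<^sup>2 + (B2 i j)\<^sup>2) / (2 * th)))"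
    using mult_left_mono[OF s h0] .
  also have "\<dots> = (1 + kap) * (th / 2 * (ipN K G1 G1 + ipN K G2 G2) + (ipN K B1 B1 + ipN K B2 B2) / (2 * th))"
  proof -
    define c1 where "c1 = (1 + kap) * th / 2"
    define c2 where "c2 = (1 + kap) / (2 * th)"
    have pt: "(1 + kap) * (th / 2 * ((G1 i j)\<^sup>2 + (G2 i j)\<^sup>2) + ((B1 i j)\<^sup>2 + (B2 i j)\<^sup>2) / (2 * th))
       = c1 * (G1 i j * G1 i j) + c1 * (G2 i j * G2 i j) + c2 * (B1 i j * B1 i j) + c2 * (B2 i j * B2 i j)" for i j
      using assms(2) unfolding c1_def c2_def by (simp add: field_simps power2_eq_square)
    have e: "(\<Sum>i<NN K. \<Sum>j<NN K. (1 + kap) * (th / 2 * ((G1 i j)\<^sup>2 + (G2 i j)\<^sup>2) + ((B1 i j)\<^sup>2 + (B2 i j)\<^sup>2) / (2 * th)))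
      = c1 * (\<Sum>i<NN K. \<Sum>j<NN K. G1 i j * G1 i j) + c1 * (\<Sum>i<NN K. \<Sum>j<NN K. G2 i j * G2 i j)
          + c2 * (\<Sum>i<NN K. \<Sum>j<NN K. B1 i j * B1 i j) + c2 * (\<Sum>i<NN K. \<Sum>j<NN K. B2 i j * B2 i j)"
      unfolding pt by (simp only: sum.distrib sum_distrib_left)
    show ?thesis unfolding e ipN_def c1_def c2_def using assms(2) by (simp add: field_simps)
  qed
  finally show ?thesis .
qed


definition P1f :: "real \<Rightarrow> real" where "P1f x = (3/2 * g1 x + 1/2 * g2 x) / g0 x"
definition P2f :: "real \<Rightarrow> real" where "P2f x = (1/2 * g1 x + 1/2 * g2 x) / g0 x"

lemma P_bounds: assumes "x \<ge> 0" shows "0 \<le> P1f x" "P1f x \<le> 2" "0 \<le> P2f x" "P2f x \<le> 1"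
proof -
  note b = g_bounds[OF assms]
  have g0p: "g0 x > 0" using g0_pos[OF assms] .
  show "0 \<le> P1f x" "0 \<le> P2f x" unfolding P1f_def P2f_def using b g0p by auto
  show "P1f x \<le> 2" unfolding P1f_def using b g0p by (simp add: divide_le_eq)
  show "P2f x \<le> 1" unfolding P2f_def using b g0p by (simp add: divide_le_eq)
qed

lemma lam_nonneg: "lam k l \<ge> 0" by (simp add: lam_def)
lemma lam_zero: "lam k l = 0 \<Longrightarrow> k = 0 \<and> l = 0"
  by (simp add: lam_def)

lemma mode_full:
  assumes sch: "scheme_step K eps kap dt A u1 u0 um1 um2" and kl: "k \<in> II K" "l \<in> II K"
    and pos: "eps > 0" "kap \<ge> 0" "dt > 0" "g \<ge> 0" and Ab: "A \<ge> 2 * (g + 1/2) ^ 4 / eps\<^sup>2"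
  defines "C0 \<equiv> fcoef K u0 k l" and "C1 \<equiv> fcoef K u1 k l"
    and "Nh \<equiv> mx k * fcoef K (Fx K u0) k l + mx l * fcoef K (Fy K u0) k l"
    and "D1 \<equiv> fcoef K (fN K kap u0) k l - fcoef K (fN K kap um1) k l"
    and "D2 \<equiv> fcoef K (fN K kap um1) k l - fcoef K (fN K kap um2) k l"
    and "x \<equiv> dt * LamL eps kap k l"
  shows "Re (Nh * cnj (C1 - C0)) + lam k l / 2 * (cmod (C1 - C0))\<^sup>2 + eps\<^sup>2 * (lam k l)\<^sup>2 / 2 * ((cmod C1)\<^sup>2 - (cmod C0)\<^sup>2)
    \<le> - (g * lam k l) * (cmod (C1 - C0))\<^sup>2 - Re (of_real (P1f x) * D1 * cnj (C1 - C0)) + Re (of_real (P2f x) * D2 * cnj (C1 - C0))"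
proof (cases "lam k l = 0")
  case True
  then have k0: "k = 0" "l = 0" using lam_zero by auto
  have x0: "x = 0" unfolding x_def LamL_def using True by simp
  have Fz: "fcoef K (fN K kap v) k l = 0" for v using cfN_H[OF kl, of kap v] k0 by simp
  have "C1 = C0" using scheme_coef[OF sch kl] unfolding C1_def[symmetric] C0_def[symmetric] x_def[symmetric]
    using True x0 Fz by simp
  moreover have "Nh = 0" unfolding Nh_def using k0 by simp
  ultimately show ?thesis using True by simp
next
  case False
  then have lp: "lam k l > 0" using lam_nonneg[of k l] by simp
  define Lam where "Lam = eps\<^sup>2 * (lam k l)\<^sup>2 + kap * lam k l"
  have LamE: "LamL eps kap k l = Lam" by (simp add: LamL_def Lam_def)
  have Lp: "Lam > 0" unfolding Lam_def using lp pos by (simp add: add_pos_nonneg)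
  have xp: "x > 0" unfolding x_def LamE using Lp pos by simp
  have G0p: "g0 x > 0" using g0_pos xp by simp
  have xg: "x * g0 x = 1 - exp (- x)" using g0_eq xp by simp
  have F0: "fcoef K (fN K kap u0) k l = Nh - of_real (kap * lam k l) * C0"
    unfolding Nh_def C0_def using cfN_N[OF kl] by simp
  have sc: "C1 = of_real (exp (- x)) * C0 - of_real (A * dt ^ 3 * g0 x * (lam k l)\<^sup>2) * (C1 - C0)
     - of_real (dt * g0 x) * fcoef K (fN K kap u0) k l
     - of_real (dt * g1 x) * (3/2 * fcoef K (fN K kap u0) k l - 2 * fcoef K (fN K kap um1) k l + 1/2 * fcoef K (fN K kap um2) k l)
     - of_real (dt * g2 x) * (1/2 * fcoef K (fN K kap u0) k l - fcoef K (fN K kap um1) k l + 1/2 * fcoef K (fN K kap um2) k l)"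
    using scheme_coef[OF sch kl] unfolding C1_def C0_def x_def .
  have idd: "Nh = - of_real (1 / (dt * g0 x) + A * dt\<^sup>2 * (lam k l)\<^sup>2) * (C1 - C0) - of_real (eps\<^sup>2 * (lam k l)\<^sup>2) * C0
     - of_real ((3/2 * g1 x + 1/2 * g2 x) / g0 x) * D1 + of_real ((1/2 * g1 x + 1/2 * g2 x) / g0 x) * D2"
    unfolding D1_def D2_def
    by (rule mode_id[OF sc F0 xg _ Lam_def G0p pos(3)]) (simp add: x_def LamE)
  have co: "1 / (dt * g0 x) + A * dt\<^sup>2 * (lam k l)\<^sup>2 - lam k l / 2 - eps\<^sup>2 * (lam k l)\<^sup>2 / 2 \<ge> g * lam k l"
    using mode_ineq[OF pos(1,2,3) lp pos(4) Ab] unfolding x_def LamE Lam_def .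
  show ?thesis
    using mode_ineq_c[OF idd co] unfolding P1f_def P2f_def by (simp add: mult_ac)
qed

lemma sum_modes_mono:
  "(\<And>k l. k \<in> II K \<Longrightarrow> l \<in> II K \<Longrightarrow> f k l \<le> g k l) \<Longrightarrow>
   (\<Sum>k\<in>II K. \<Sum>l\<in>II K. (f k l :: real)) \<le> (\<Sum>k\<in>II K. \<Sum>l\<in>II K. g k l)"
  by (intro sum_mono) auto

lemma fcoef_gsub: "fcoef K (gsub f g) k l = fcoef K f k l - fcoef K g k l"
  unfolding gsub_def by (rule fcoef_sub)

lemma herm_realf: "herm (\<lambda>k l. complex_of_real (P (dt * LamL e a k l)))"
  by (simp add: herm_def LamL_neg)

lemma cross_modes:
  assumes "\<And>k l. k \<in> II K \<Longrightarrow> l \<in> II K \<Longrightarrow> mx k * fcoef K Ax k l + mx l * fcoef K Ay k l = D k l"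
  shows "ipN K Ax (DNx K (fmult K (\<lambda>k l. complex_of_real (P (dt * LamL e a k l))) d))
       + ipN K Ay (DNy K (fmult K (\<lambda>k l. complex_of_real (P (dt * LamL e a k l))) d))
     = (\<Sum>k\<in>II K. \<Sum>l\<in>II K. - Re (of_real (P (dt * LamL e a k l)) * D k l * cnj (fcoef K d k l)))"
  unfolding ipg_modes
  by (intro sum.cong refl) (simp only: fcoef_fmult[OF herm_realf] assms, simp add: mult_ac)

lemma gradW: assumes "\<And>x. x \<ge> 0 \<Longrightarrow> 0 \<le> P x \<and> P x \<le> c" "dt > 0" "e \<ge> 0" "a \<ge> 0"
  shows "(gradnorm2N K (fmult K (\<lambda>k l. complex_of_real (P (dt * LamL e a k l))) d))\<^sup>2 \<le> c\<^sup>2 * (gradnorm2N K d)\<^sup>2"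
proof -
  have "(gradnorm2N K (fmult K (\<lambda>k l. complex_of_real (P (dt * LamL e a k l))) d))\<^sup>2
     = (\<Sum>k\<in>II K. \<Sum>l\<in>II K. lam k l * ((P (dt * LamL e a k l))\<^sup>2 * (cmod (fcoef K d k l))\<^sup>2))"
    unfolding gradsq by (intro sum.cong refl) (simp add: fcoef_fmult[OF herm_realf] norm_mult power_mult_distrib)
  also have "\<dots> \<le> (\<Sum>k\<in>II K. \<Sum>l\<in>II K. lam k l * (c\<^sup>2 * (cmod (fcoef K d k l))\<^sup>2))"
  proof (rule sum_modes_mono)
    fix k l
    have L0: "LamL e a k l \<ge> 0" unfolding LamL_def using assms(3,4) lam_nonneg[of k l] by simp
    then have "dt * LamL e a k l \<ge> 0" using assms(2) by simp
    then have p: "0 \<le> P (dt * LamL e a k l)" "P (dt * LamL e a k l) \<le> c" using assms(1) by auto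
    then have "(P (dt * LamL e a k l))\<^sup>2 \<le> c\<^sup>2" by (intro power_mono) auto
    then show "lam k l * ((P (dt * LamL e a k l))\<^sup>2 * (cmod (fcoef K d k l))\<^sup>2) \<le> lam k l * (c\<^sup>2 * (cmod (fcoef K d k l))\<^sup>2)"
      using lam_nonneg[of k l] by (intro mult_left_mono mult_right_mono) auto
  qed
  also have "\<dots> = c\<^sup>2 * (gradnorm2N K d)\<^sup>2" unfolding gradsq by (simp add: sum_distrib_left mult_ac)
  finally show ?thesis .
qed

lemma lip_grid:
  assumes "kap \<ge> 0"
  shows "((\<lambda>i j. Hx K kap v i j - Hx K kap w i j) i j)\<^sup>2 + ((\<lambda>i j. Hy K kap v i j - Hy K kap w i j) i j)\<^sup>2
     \<le> (1 + kap)\<^sup>2 * ((DNx K (gsub v w) i j)\<^sup>2 + (DNy K (gsub v w) i j)\<^sup>2)"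
  unfolding DNx_gsub DNy_gsub Hx_def Hy_def using lipH[OF assms] by simp

lemma comb:
  fixes e1 e0 a b c cX cY cZ :: real
  shows "e1 - e0 \<le> - 3 * cX + (b + a) + (1/2 * c + 1/2 * a) \<Longrightarrow> a \<le> cX \<Longrightarrow> b \<le> cY \<Longrightarrow> c \<le> cZ
    \<Longrightarrow> e1 + 3/2 * cX + 1/2 * cY \<le> e0 + 3/2 * cY + 1/2 * cZ"
  by linarith

lemma energy_step:
  fixes K :: nat and eps kap dt A C4 gam0 gam1 gam3 :: real
  assumes sch: "scheme_step K eps kap dt A u1 u0 um1 um2"
    and pos: "eps > 0" "kap \<ge> 0" "dt > 0" "C4 \<ge> 1"
    and gam: "gam0 = 3 * C4 * (1 + kap)" "gam1 = 3/2 * C4 * (1 + kap)" "gam3 = 1/2 * C4 * (1 + kap)"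
    and Ab: "A \<ge> 2 * (gam0 + 1/2) ^ 4 / eps\<^sup>2"
  shows "Etil K eps gam1 gam3 u1 u0 um1 \<le> Etil K eps gam1 gam3 u0 um1 um2"
proof -
  define d where "d = gsub u1 u0"
  define d1 where "d1 = gsub u0 um1"
  define d2 where "d2 = gsub um1 um2"
  define X2 where "X2 = (gradnorm2N K d)\<^sup>2"
  define Y2 where "Y2 = (gradnorm2N K d1)\<^sup>2"
  define Z2 where "Z2 = (gradnorm2N K d2)\<^sup>2"
  define W1 where "W1 = fmult K (\<lambda>k l. complex_of_real (P1f (dt * LamL eps kap k l))) d"
  define W2 where "W2 = fmult K (\<lambda>k l. complex_of_real (P2f (dt * LamL eps kap k l))) d"
  define Hx1 where "Hx1 = (\<lambda>i j. Hx K kap u0 i j - Hx K kap um1 i j)"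
  define Hy1 where "Hy1 = (\<lambda>i j. Hy K kap u0 i j - Hy K kap um1 i j)"
  define Hx2 where "Hx2 = (\<lambda>i j. Hx K kap um2 i j - Hx K kap um1 i j)"
  define Hy2 where "Hy2 = (\<lambda>i j. Hy K kap um2 i j - Hy K kap um1 i j)"
  define C0 where "C0 = (\<lambda>k l. fcoef K u0 k l)"
  define C1 where "C1 = (\<lambda>k l. fcoef K u1 k l)"
  define Nh where "Nh = (\<lambda>k l. mx k * fcoef K (Fx K u0) k l + mx l * fcoef K (Fy K u0) k l)"
  define D1 where "D1 = (\<lambda>k l. fcoef K (fN K kap u0) k l - fcoef K (fN K kap um1) k l)"
  define D2 where "D2 = (\<lambda>k l. fcoef K (fN K kap um1) k l - fcoef K (fN K kap um2) k l)"
  define p1 where "p1 = (\<lambda>k l. P1f (dt * LamL eps kap k l))"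
  define p2 where "p2 = (\<lambda>k l. P2f (dt * LamL eps kap k l))"
  have g0: "gam0 \<ge> 0" using gam pos by simp
  have cd: "fcoef K d k l = C1 k l - C0 k l" for k l unfolding d_def C0_def C1_def by (rule fcoef_gsub)
  have E1: "EN K eps u1 - EN K eps u0 \<le> - (ipN K (Fx K u0) (DNx K d) + ipN K (Fy K u0) (DNy K d)) + 1/2 * X2
      + eps\<^sup>2 / 2 * ((norm2N K (LapN K u1))\<^sup>2 - (norm2N K (LapN K u0))\<^sup>2)"
    using ln_part[of K u1 u0] unfolding EN_def d_def X2_def by (simp add: algebra_simps)
  have a: "- (ipN K (Fx K u0) (DNx K d) + ipN K (Fy K u0) (DNy K d)) = (\<Sum>k\<in>II K. \<Sum>l\<in>II K. Re (Nh k l * cnj (C1 k l - C0 k l)))"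
    unfolding ipg_modes Nh_def cd by (simp only: sum_negf minus_minus)
  have b: "X2 = (\<Sum>k\<in>II K. \<Sum>l\<in>II K. lam k l * (cmod (C1 k l - C0 k l))\<^sup>2)"
    unfolding X2_def gradsq cd ..
  have c: "(norm2N K (LapN K u1))\<^sup>2 - (norm2N K (LapN K u0))\<^sup>2 = (\<Sum>k\<in>II K. \<Sum>l\<in>II K. (lam k l)\<^sup>2 * (cmod (C1 k l))\<^sup>2) - (\<Sum>k\<in>II K. \<Sum>l\<in>II K. (lam k l)\<^sup>2 * (cmod (C0 k l))\<^sup>2)"
    unfolding lapsq C0_def C1_def ..
  define T where "T = (\<lambda>k l. Re (Nh k l * cnj (C1 k l - C0 k l)) + 1/2 * (lam k l * (cmod (C1 k l - C0 k l))\<^sup>2)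
     + eps\<^sup>2 / 2 * ((lam k l)\<^sup>2 * (cmod (C1 k l))\<^sup>2 - (lam k l)\<^sup>2 * (cmod (C0 k l))\<^sup>2))"
  have E2: "- (ipN K (Fx K u0) (DNx K d) + ipN K (Fy K u0) (DNy K d)) + 1/2 * X2
      + eps\<^sup>2 / 2 * ((norm2N K (LapN K u1))\<^sup>2 - (norm2N K (LapN K u0))\<^sup>2) = (\<Sum>k\<in>II K. \<Sum>l\<in>II K. T k l)"
    unfolding a b c T_def by (simp only: sum.distrib sum_subtractf sum_distrib_left right_diff_distrib)
  define S where "S = (\<lambda>k l. - (gam0 * lam k l) * (cmod (C1 k l - C0 k l))\<^sup>2
      + (- Re (of_real (p1 k l) * D1 k l * cnj (C1 k l - C0 k l))) + Re (of_real (p2 k l) * D2 k l * cnj (C1 k l - C0 k l)))"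
  have E3: "(\<Sum>k\<in>II K. \<Sum>l\<in>II K. T k l) \<le> (\<Sum>k\<in>II K. \<Sum>l\<in>II K. S k l)"
  proof (rule sum_modes_mono)
    fix k l assume kl: "k \<in> II K" "l \<in> II K"
    have m: "Re (Nh k l * cnj (C1 k l - C0 k l)) + lam k l / 2 * (cmod (C1 k l - C0 k l))\<^sup>2 + eps\<^sup>2 * (lam k l)\<^sup>2 / 2 * ((cmod (C1 k l))\<^sup>2 - (cmod (C0 k l))\<^sup>2)
      \<le> - (gam0 * lam k l) * (cmod (C1 k l - C0 k l))\<^sup>2 - Re (of_real (p1 k l) * D1 k l * cnj (C1 k l - C0 k l)) + Re (of_real (p2 k l) * D2 k l * cnj (C1 k l - C0 k l))"
      unfolding Nh_def C0_def C1_def D1_def D2_def p1_def p2_def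
      by (rule mode_full[OF sch kl pos(1,2,3) g0 Ab])
    moreover have "T k l = Re (Nh k l * cnj (C1 k l - C0 k l)) + lam k l / 2 * (cmod (C1 k l - C0 k l))\<^sup>2 + eps\<^sup>2 * (lam k l)\<^sup>2 / 2 * ((cmod (C1 k l))\<^sup>2 - (cmod (C0 k l))\<^sup>2)"
      unfolding T_def by (simp add: field_simps)
    moreover have "S k l = - (gam0 * lam k l) * (cmod (C1 k l - C0 k l))\<^sup>2 - Re (of_real (p1 k l) * D1 k l * cnj (C1 k l - C0 k l)) + Re (of_real (p2 k l) * D2 k l * cnj (C1 k l - C0 k l))"
      unfolding S_def by simp
    ultimately show "T k l \<le> S k l" by simp
  qed
  have Q1e: "ipN K Hx1 (DNx K W1) + ipN K Hy1 (DNy K W1) = (\<Sum>k\<in>II K. \<Sum>l\<in>II K. - Re (of_real (p1 k l) * D1 k l * cnj (C1 k l - C0 k l)))"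
    unfolding W1_def p1_def cd[symmetric]
  proof (rule cross_modes)
    fix k l assume kl: "k \<in> II K" "l \<in> II K"
    show "mx k * fcoef K Hx1 k l + mx l * fcoef K Hy1 k l = D1 k l"
      unfolding Hx1_def Hy1_def D1_def fcoef_sub cfN_H[OF kl] by (simp add: algebra_simps)
  qed
  have Q2e: "ipN K Hx2 (DNx K W2) + ipN K Hy2 (DNy K W2) = (\<Sum>k\<in>II K. \<Sum>l\<in>II K. Re (of_real (p2 k l) * D2 k l * cnj (C1 k l - C0 k l)))"
  proof -
    have "ipN K Hx2 (DNx K W2) + ipN K Hy2 (DNy K W2) = (\<Sum>k\<in>II K. \<Sum>l\<in>II K. - Re (of_real (p2 k l) * (- D2 k l) * cnj (C1 k l - C0 k l)))"
      unfolding W2_def p2_def cd[symmetric]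
    proof (rule cross_modes)
      fix k l assume kl: "k \<in> II K" "l \<in> II K"
      show "mx k * fcoef K Hx2 k l + mx l * fcoef K Hy2 k l = - D2 k l"
        unfolding Hx2_def Hy2_def D2_def fcoef_sub cfN_H[OF kl] by (simp add: algebra_simps)
    qed
    then show ?thesis by simp
  qed
  have E4: "(\<Sum>k\<in>II K. \<Sum>l\<in>II K. S k l) = - gam0 * X2 + (ipN K Hx1 (DNx K W1) + ipN K Hy1 (DNy K W1)) + (ipN K Hx2 (DNx K W2) + ipN K Hy2 (DNy K W2))"
    unfolding Q1e Q2e b S_def by (simp only: sum.distrib sum_distrib_left mult.assoc mult_minus_left)
  have Q1b: "ipN K Hx1 (DNx K W1) + ipN K Hy1 (DNy K W1) \<le> (1 + kap) * (2 / 2 * Y2 + (gradnorm2N K W1)\<^sup>2 / (2 * 2))"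
  proof -
    have "ipN K Hx1 (DNx K W1) + ipN K Hy1 (DNy K W1) \<le> (1 + kap) * (2 / 2 * (ipN K (DNx K d1) (DNx K d1) + ipN K (DNy K d1) (DNy K d1))
       + (ipN K (DNx K W1) (DNx K W1) + ipN K (DNy K W1) (DNy K W1)) / (2 * 2))"
      by (rule young_grid[OF pos(2)]) (use lip_grid[OF pos(2)] in \<open>simp_all add: Hx1_def Hy1_def d1_def\<close>)
    then show ?thesis unfolding Y2_def gradsq_ip .
  qed
  have Q2b: "ipN K Hx2 (DNx K W2) + ipN K Hy2 (DNy K W2) \<le> (1 + kap) * (1 / 2 * Z2 + (gradnorm2N K W2)\<^sup>2 / (2 * 1))"
  proof -
    have pw: "(Hx2 i j)\<^sup>2 + (Hy2 i j)\<^sup>2 \<le> (1 + kap)\<^sup>2 * ((DNx K d2 i j)\<^sup>2 + (DNy K d2 i j)\<^sup>2)" for i j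
    proof -
      have "(Hx2 i j)\<^sup>2 + (Hy2 i j)\<^sup>2 \<le> (1 + kap)\<^sup>2 * ((DNx K (gsub um2 um1) i j)\<^sup>2 + (DNy K (gsub um2 um1) i j)\<^sup>2)"
        using lip_grid[OF pos(2), where v=um2 and w=um1 and K=K and i=i and j=j] unfolding Hx2_def Hy2_def by simp
      also have "(DNx K (gsub um2 um1) i j)\<^sup>2 + (DNy K (gsub um2 um1) i j)\<^sup>2 = (DNx K d2 i j)\<^sup>2 + (DNy K d2 i j)\<^sup>2"
        unfolding d2_def DNx_gsub DNy_gsub by (simp add: power2_commute)
      finally show ?thesis .
    qed
    have "ipN K Hx2 (DNx K W2) + ipN K Hy2 (DNy K W2) \<le> (1 + kap) * (1 / 2 * (ipN K (DNx K d2) (DNx K d2) + ipN K (DNy K d2) (DNy K d2))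
       + (ipN K (DNx K W2) (DNx K W2) + ipN K (DNy K W2) (DNy K W2)) / (2 * 1))"
      by (rule young_grid[OF pos(2) _ pw]) simp
    then show ?thesis unfolding Z2_def gradsq_ip .
  qed
  have W1b: "(gradnorm2N K W1)\<^sup>2 \<le> 2\<^sup>2 * X2"
    unfolding W1_def X2_def by (rule gradW) (use P_bounds pos in auto)
  have W2b: "(gradnorm2N K W2)\<^sup>2 \<le> 1\<^sup>2 * X2"
    unfolding W2_def X2_def by (rule gradW) (use P_bounds pos in auto)
  have X0: "X2 \<ge> 0" "Y2 \<ge> 0" "Z2 \<ge> 0" by (simp_all add: X2_def Y2_def Z2_def)
  have k1: "1 + kap \<ge> 0" using pos by simp
  have main: "EN K eps u1 - EN K eps u0 \<le> - gam0 * X2 + (1 + kap) * (Y2 + X2) + (1 + kap) * (1/2 * Z2 + 1/2 * X2)"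
  proof -
    have "(1 + kap) * (2 / 2 * Y2 + (gradnorm2N K W1)\<^sup>2 / (2 * 2)) \<le> (1 + kap) * (Y2 + X2)"
      using W1b k1 by (intro mult_left_mono) auto
    moreover have "(1 + kap) * (1 / 2 * Z2 + (gradnorm2N K W2)\<^sup>2 / (2 * 1)) \<le> (1 + kap) * (1/2 * Z2 + 1/2 * X2)"
      using W2b k1 by (intro mult_left_mono) auto
    ultimately show ?thesis using E1 E2 E3 E4 Q1b Q2b by linarith
  qed
  have f1: "(1 + kap) * X2 \<le> C4 * (1 + kap) * X2"
  proof -
    have "(1 + kap) * X2 \<ge> 0" using k1 X0 by simp
    from mult_right_mono[OF pos(4) this] show ?thesis by (simp add: mult.assoc)
  qed
  have f2: "(1 + kap) * Y2 \<le> C4 * (1 + kap) * Y2"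
  proof -
    have "(1 + kap) * Y2 \<ge> 0" using k1 X0 by simp
    from mult_right_mono[OF pos(4) this] show ?thesis by (simp add: mult.assoc)
  qed
  have f3: "(1 + kap) * Z2 \<le> C4 * (1 + kap) * Z2"
  proof -
    have "(1 + kap) * Z2 \<ge> 0" using k1 X0 by simp
    from mult_right_mono[OF pos(4) this] show ?thesis by (simp add: mult.assoc)
  qed
  have e1: "- gam0 * X2 + (1 + kap) * (Y2 + X2) + (1 + kap) * (1/2 * Z2 + 1/2 * X2)
     = - 3 * (C4 * (1 + kap) * X2) + ((1 + kap) * Y2 + (1 + kap) * X2) + (1/2 * ((1 + kap) * Z2) + 1/2 * ((1 + kap) * X2))"
    unfolding gam by (simp add: algebra_simps)
  have e2: "gam1 * X2 = 3/2 * (C4 * (1 + kap) * X2)" "gam3 * Y2 = 1/2 * (C4 * (1 + kap) * Y2)"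
     "gam1 * Y2 = 3/2 * (C4 * (1 + kap) * Y2)" "gam3 * Z2 = 1/2 * (C4 * (1 + kap) * Z2)"
    unfolding gam by (simp_all add: algebra_simps)
  have "EN K eps u1 + gam1 * X2 + gam3 * Y2 \<le> EN K eps u0 + gam1 * Y2 + gam3 * Z2"
    unfolding e2 by (rule comb[OF main[unfolded e1] f1 f2 f3])
  then show ?thesis unfolding Etil_def X2_def Y2_def Z2_def d_def d1_def d2_def .
qed



theorem theorem2p1:
  fixes K :: nat and eps kap dt A C4 gam0 gam1 gam3 alpha0 :: real
    and u :: "int \<Rightarrow> grid"
  assumes "eps > 0" and "kap \<ge> 1/4" and "dt > 0"
    and "C4 = 1 / (1 - exp (- 2))"
    and "gam0 = 3 * C4 * (1 + kap)"
    and "gam1 = 3/2 * C4 * (1 + kap)"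
    and "gam3 = 1/2 * C4 * (1 + kap)"
    and "alpha0 = ln ((gam0 + kap / 2) / (gam0 - kap / 2))"
    and "A \<ge> (gam0 - kap / 4) ^ 4 / alpha0\<^sup>2 / eps\<^sup>2"
    and "gmean K (u (-2)) = gmean K (u 0)" and "gmean K (u (-1)) = gmean K (u 0)"
    and "\<forall>n\<ge>0. scheme_step K eps kap dt A (u (n + 1)) (u n) (u (n - 1)) (u (n - 2))"
  shows "\<forall>n\<ge>0. Etil K eps gam1 gam3 (u (n + 1)) (u n) (u (n - 1))
                \<le> Etil K eps gam1 gam3 (u n) (u (n - 1)) (u (n - 2))"
proof (intro allI impI)
  fix n :: int assume n: "n \<ge> 0"
  have AB: "A \<ge> 2 * (gam0 + 1/2) ^ 4 / eps\<^sup>2" "C4 \<ge> 1"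
    using A_bound[OF assms(1,2,4,5,8,9)] by auto
  have k0: "kap \<ge> 0" using assms(2) by simp
  show "Etil K eps gam1 gam3 (u (n + 1)) (u n) (u (n - 1)) \<le> Etil K eps gam1 gam3 (u n) (u (n - 1)) (u (n - 2))"
    by (rule energy_step[OF _ assms(1) k0 assms(3) AB(2) assms(5,6,7) AB(1)]) (use assms(12) n in blast)
qed

end
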